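(* Let $L\ne\{0,1\}$ be a sharp C-lattice domain in which every element is a join of principal elements. Then for every maximal element $m$ of $L$, the localization $L_m$ is isomorphic to $\mathbb{Z}_-$ or to $\mathbb{R}_1$, and $L$ is a one-dimensional Prüfer lattice (every compact element is principal, and every nonzero prime element is maximal).
   Context: A multiplicative lattice is a complete lattice $(L,\le)$ with bottom $0$ and top $1$ which is also a commutative monoid with identity $1$ such that $a(\bigvee_\alpha b_\alpha)=\bigvee_\alpha(ab_\alpha)$ for all $a,b_\alpha\in L$. For $x,y\in L$, $(y:x)=\bigvee\{a\in L: ax\le y\}$. An element $c$ is compact if $c\le\bigvee S$ implies $c\le\bigvee T$ for some finite $T\subseteq S$. A C-lattice is a multiplicative lattice in which $1$ is compact, the product of two compact elements is compact, and every element is a join of compact elements; $L^*$ denotes its compact elements. A proper element $p\ne1$ is prime if $xy\le p$ implies $x\le p$ or $y\le p$; maximal elements are maximal in $L\setminus\{1\}$; $L$ is a domain if $0$ is prime. An element $x$ is principal if $y\wedge zx=((y:x)\wedge z)x$ and $y\vee(z:x)=((yx\vee z):x)$ for all $y,z\in L$. $L$ is sharp if whenever $a_1a_2\le b$ with $a_1,a_2,b\in L$, there exist $b_1,b_2\in L$ with $a_i\le b_i$ ($i=1,2$) and $b=b_1b_2$. For $p$ prime and $x\in L$, $x_p=\bigvee\{a\in L^*: as\le x \text{ for some } s\in L^*,\ s\not\le p\}$, and $L_p=\{x_p:x\in L\}$ is a lattice with multiplication $(x,y)\mapsto(xy)_p$ and the induced order. $\mathbb{Z}_-$ is the set of integers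 $\le0$ together with $-\infty$, with the usual order and addition as multiplication. $\mathbb{R}_1$ is the set of all intervals $(r,\infty]$ and $[r,\infty]$ with $r\ge0$ real, together with $\{\infty\}$, ordered by inclusion with interval addition as multiplication (isomorphic to the ideal lattice of a valuation domain with value group $\mathbb{R}$). *)

theory Defs
  imports Main "HOL-Library.Extended_Real"
begin

text \<open>A multiplicative lattice is represented by a complete lattice type 'a
(bottom = 0, top = 1) together with an explicit multiplication mul.\<close>

definition mult_lattice :: "('a::complete_lattice \<Rightarrow> 'a \<Rightarrow> 'a) \<Rightarrow> bool" where
  "mult_lattice mul \<longleftrightarrow>
     (\<forall>a b c. mul (mul a b) c = mul a (mul b c)) \<and>
     (\<forall>a b. mul a b = mul b a) \<and>
     (\<forall>a. mul top a = a) \<and>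
     (\<forall>a S. mul a (Sup S) = Sup ((\<lambda>b. mul a b) ` S))"

definition res :: "('a::complete_lattice \<Rightarrow> 'a \<Rightarrow> 'a) \<Rightarrow> 'a \<Rightarrow> 'a \<Rightarrow> 'a" where
  "res mul y x = Sup {a. mul a x \<le> y}"

definition compact_el :: "'a::complete_lattice \<Rightarrow> bool" where
  "compact_el c \<longleftrightarrow> (\<forall>S. c \<le> Sup S \<longrightarrow> (\<exists>T. finite T \<and> T \<subseteq> S \<and> c \<le> Sup T))"

definition C_lattice :: "('a::complete_lattice \<Rightarrow> 'a \<Rightarrow> 'a) \<Rightarrow> bool" where
  "C_lattice mul \<longleftrightarrow> mult_lattice mul \<and> compact_el (top::'a) \<and>
     (\<forall>a b. compact_el a \<and> compact_el b \<longrightarrow> compact_el (mul a b)) \<and>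
     (\<forall>x::'a. \<exists>S. (\<forall>s\<in>S. compact_el s) \<and> x = Sup S)"

definition prime_el :: "('a::complete_lattice \<Rightarrow> 'a \<Rightarrow> 'a) \<Rightarrow> 'a \<Rightarrow> bool" where
  "prime_el mul p \<longleftrightarrow> p \<noteq> top \<and> (\<forall>x y. mul x y \<le> p \<longrightarrow> x \<le> p \<or> y \<le> p)"

definition maximal_el :: "'a::complete_lattice \<Rightarrow> bool" where
  "maximal_el m \<longleftrightarrow> m \<noteq> top \<and> (\<forall>x. m \<le> x \<longrightarrow> x = m \<or> x = top)"

definition lattice_domain :: "('a::complete_lattice \<Rightarrow> 'a \<Rightarrow> 'a) \<Rightarrow> bool" where
  "lattice_domain mul \<longleftrightarrow> prime_el mul bot"

definition principal_el :: "('a::complete_lattice \<Rightarrow> 'a \<Rightarrow> 'a) \<Rightarrow> 'a \<Rightarrow> bool" where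
  "principal_el mul x \<longleftrightarrow>
     (\<forall>y z. inf y (mul z x) = mul (inf (res mul y x) z) x \<and>
            sup y (res mul z x) = res mul (sup (mul y x) z) x)"

definition sharp :: "('a::complete_lattice \<Rightarrow> 'a \<Rightarrow> 'a) \<Rightarrow> bool" where
  "sharp mul \<longleftrightarrow> (\<forall>a1 a2 b. mul a1 a2 \<le> b \<longrightarrow>
      (\<exists>b1 b2. a1 \<le> b1 \<and> a2 \<le> b2 \<and> b = mul b1 b2))"

text \<open>Localization at a prime p: x_p, carrier L_p, multiplication (xy)_p,
  order induced from L.\<close>

definition loc :: "('a::complete_lattice \<Rightarrow> 'a \<Rightarrow> 'a) \<Rightarrow> 'a \<Rightarrow> 'a \<Rightarrow> 'a" where
  "loc mul p x = Sup {a. compact_el a \<and>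
       (\<exists>s. compact_el s \<and> \<not> s \<le> p \<and> mul a s \<le> x)}"

definition loc_carrier :: "('a::complete_lattice \<Rightarrow> 'a \<Rightarrow> 'a) \<Rightarrow> 'a \<Rightarrow> 'a set" where
  "loc_carrier mul p = range (loc mul p)"

definition loc_mul :: "('a::complete_lattice \<Rightarrow> 'a \<Rightarrow> 'a) \<Rightarrow> 'a \<Rightarrow> 'a \<Rightarrow> 'a \<Rightarrow> 'a" where
  "loc_mul mul p x y = loc mul p (mul x y)"

definition mlat_iso ::
  "'a set \<Rightarrow> ('a \<Rightarrow> 'a \<Rightarrow> bool) \<Rightarrow> ('a \<Rightarrow> 'a \<Rightarrow> 'a) \<Rightarrow>
   'b set \<Rightarrow> ('b \<Rightarrow> 'b \<Rightarrow> bool) \<Rightarrow> ('b \<Rightarrow> 'b \<Rightarrow> 'b) \<Rightarrow> ('a \<Rightarrow> 'b) \<Rightarrow> bool" where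
  "mlat_iso A leA mA B leB mB f \<longleftrightarrow> bij_betw f A B \<and>
     (\<forall>x\<in>A. \<forall>y\<in>A. leB (f x) (f y) \<longleftrightarrow> leA x y) \<and>
     (\<forall>x\<in>A. \<forall>y\<in>A. f (mA x y) = mB (f x) (f y))"

definition mlat_isomorphic ::
  "'a set \<Rightarrow> ('a \<Rightarrow> 'a \<Rightarrow> bool) \<Rightarrow> ('a \<Rightarrow> 'a \<Rightarrow> 'a) \<Rightarrow>
   'b set \<Rightarrow> ('b \<Rightarrow> 'b \<Rightarrow> bool) \<Rightarrow> ('b \<Rightarrow> 'b \<Rightarrow> 'b) \<Rightarrow> bool" where
  "mlat_isomorphic A leA mA B leB mB \<longleftrightarrow> (\<exists>f. mlat_iso A leA mA B leB mB f)"

text \<open>Z_-: integers \<le> 0 together with -\<infinity>, usual order, addition as multiplication.\<close>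

definition Zminus :: "ereal set" where
  "Zminus = {ereal (of_int n) | n::int. n \<le> 0} \<union> {-\<infinity>}"

text \<open>R_1: intervals (r,\<infinity>] and [r,\<infinity>] (r \<ge> 0 real) and {\<infinity>}, ordered by
  inclusion, with interval (Minkowski) addition as multiplication.\<close>

definition R1 :: "ereal set set" where
  "R1 = {{x. ereal r < x} | r. r \<ge> 0} \<union> {{x. ereal r \<le> x} | r. r \<ge> 0} \<union> {{\<infinity>}}"

definition set_add :: "ereal set \<Rightarrow> ereal set \<Rightarrow> ereal set" where
  "set_add A B = {x + y | x y. x \<in> A \<and> y \<in> B}"

definition Pruefer_1dim :: "('a::complete_lattice \<Rightarrow> 'a \<Rightarrow> 'a) \<Rightarrow> bool" where
  "Pruefer_1dim mul \<longleftrightarrow> (\<forall>c::'a. compact_el c \<longrightarrow> principal_el mul c) \<and>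
     (\<forall>p::'a. prime_el mul p \<and> p \<noteq> bot \<longrightarrow> maximal_el p)"

end

theory Submission
  imports Defs
begin


locale SL =
  fixes mul :: "'a::complete_lattice \<Rightarrow> 'a \<Rightarrow> 'a" (infixl "\<cdot>" 70)
  assumes C: "C_lattice mul" and dom: "lattice_domain mul"
    and nt: "\<exists>x::'a. x \<noteq> bot \<and> x \<noteq> top" and sh: "sharp mul"
    and PG: "\<forall>x::'a. \<exists>S. (\<forall>s\<in>S. principal_el mul s) \<and> x = Sup S"
begin

abbreviation pr :: "'a \<Rightarrow> bool" where "pr x \<equiv> principal_el mul x"
abbreviation cp :: "'a \<Rightarrow> bool" where "cp x \<equiv> compact_el x"
abbreviation rs (infixl "\<div>" 65) where "y \<div> x \<equiv> res mul y x"

lemma MLt: "mult_lattice mul" using C unfolding C_lattice_def by auto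
lemma assoc: "a \<cdot> b \<cdot> c = a \<cdot> (b \<cdot> c)" using MLt unfolding mult_lattice_def by blast
lemma comm: "a \<cdot> b = b \<cdot> a" using MLt unfolding mult_lattice_def by blast
sublocale mul: abel_semigroup mul by unfold_locales (rule assoc, rule comm)
lemmas ac = mul.assoc mul.commute mul.left_commute
lemma lcomm: "a \<cdot> (b \<cdot> c) = b \<cdot> (a \<cdot> c)" by (rule mul.left_commute)
lemma top_mul[simp]: "top \<cdot> a = a" using MLt unfolding mult_lattice_def by blast
lemma mul_top[simp]: "a \<cdot> top = a" by (subst comm) (rule top_mul)
lemma mul_Sup: "a \<cdot> Sup S = Sup ((\<lambda>b. a \<cdot> b) ` S)" using MLt unfolding mult_lattice_def by blast
lemma Sup_mul: "Sup S \<cdot> a = Sup ((\<lambda>b. b \<cdot> a) ` S)" by (simp only: comm[of _ a] mul_Sup)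
lemma mul_bot[simp]: "a \<cdot> bot = bot" using mul_Sup[of a "{}"] by simp
lemma bot_mul[simp]: "bot \<cdot> a = bot" by (subst comm) (rule mul_bot)
lemma mul_sup: "a \<cdot> (sup b c) = sup (a \<cdot> b) (a \<cdot> c)" using mul_Sup[of a "{b,c}"] by simp
lemma sup_mul: "(sup b c) \<cdot> a = sup (b \<cdot> a) (c \<cdot> a)" by (simp only: comm[of _ a] mul_sup)
lemma mono_r: "b \<le> c \<Longrightarrow> a \<cdot> b \<le> a \<cdot> c" by (metis mul_sup sup.absorb_iff2)
lemma mono_l: "b \<le> c \<Longrightarrow> b \<cdot> a \<le> c \<cdot> a" using mono_r[of b c a] by (simp only: comm[of _ a])
lemma mono2: "a \<le> b \<Longrightarrow> c \<le> d \<Longrightarrow> a \<cdot> c \<le> b \<cdot> d" by (meson mono_l mono_r order_trans)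
lemma mul_le_l: "a \<cdot> b \<le> a" using mono_r[of b top a] by simp
lemma mul_le_r: "a \<cdot> b \<le> b" using mono_l[of a top b] by simp
lemma Sup_mul_Sup: "Sup A \<cdot> Sup B = Sup {a \<cdot> b |a b. a \<in> A \<and> b \<in> B}"
proof -
  have "Sup A \<cdot> Sup B = Sup ((\<lambda>a. a \<cdot> Sup B) ` A)" by (rule Sup_mul)
  also have "\<dots> = Sup ((\<lambda>a. Sup ((\<lambda>b. a \<cdot> b) ` B)) ` A)" by (simp add: mul_Sup)
  also have "\<dots> = Sup {a \<cdot> b |a b. a \<in> A \<and> b \<in> B}"
    by (rule antisym; auto intro!: Sup_least Sup_upper2 SUP_upper2)
  finally show ?thesis .
qed

lemma res_iff: "a \<cdot> x \<le> y \<longleftrightarrow> a \<le> y \<div> x"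
proof
  assume "a \<cdot> x \<le> y" thus "a \<le> y \<div> x" unfolding res_def by (auto intro: Sup_upper)
next
  assume "a \<le> y \<div> x"
  hence "a \<cdot> x \<le> (y \<div> x) \<cdot> x" by (rule mono_l)
  also have "\<dots> \<le> y" unfolding res_def Sup_mul by (auto intro: Sup_least)
  finally show "a \<cdot> x \<le> y" .
qed
lemma res_mul: "(y \<div> x) \<cdot> x \<le> y" using res_iff by blast
lemma res_res: "(y \<div> a) \<div> b = y \<div> (a \<cdot> b)"
proof -
  have "\<And>c. c \<le> (y \<div> a) \<div> b \<longleftrightarrow> c \<le> y \<div> (a \<cdot> b)" by (simp add: res_iff[symmetric] ac)
  thus ?thesis by (meson antisym order_refl)
qed

lemma top_cp: "cp top" using C unfolding C_lattice_def by auto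
lemma cp_mul: "cp a \<Longrightarrow> cp b \<Longrightarrow> cp (a \<cdot> b)" using C unfolding C_lattice_def by auto
lemma cp_gen: "\<exists>S. (\<forall>s\<in>S. cp s) \<and> x = Sup S" using C unfolding C_lattice_def by auto
lemma Sup_cp_below: "x = Sup {c. cp c \<and> c \<le> x}"
proof -
  obtain S where S: "\<forall>s\<in>S. cp s" "x = Sup S" using cp_gen by blast
  have "S \<subseteq> {c. cp c \<and> c \<le> x}" using S by (auto intro: Sup_upper)
  hence "x \<le> Sup {c. cp c \<and> c \<le> x}" using S(2) Sup_subset_mono by metis
  moreover have "Sup {c. cp c \<and> c \<le> x} \<le> x" by (rule Sup_least) auto
  ultimately show ?thesis by (rule antisym)
qed
lemma Sup_pr_below: "x = Sup {c. pr c \<and> c \<le> x}"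
proof -
  obtain S where S: "\<forall>s\<in>S. pr s" "x = Sup S" using PG by blast
  have "S \<subseteq> {c. pr c \<and> c \<le> x}" using S by (auto intro: Sup_upper)
  hence "x \<le> Sup {c. pr c \<and> c \<le> x}" using S(2) Sup_subset_mono by metis
  moreover have "Sup {c. pr c \<and> c \<le> x} \<le> x" by (rule Sup_least) auto
  ultimately show ?thesis by (rule antisym)
qed
lemma bot_cp: "cp bot" unfolding compact_el_def by (metis bot.extremum empty_iff empty_subsetI finite.emptyI Sup_empty)
lemma cp_sup: "cp a \<Longrightarrow> cp b \<Longrightarrow> cp (sup a b)"
  unfolding compact_el_def
proof (intro allI impI)
  fix S assume a: "\<forall>S. a \<le> Sup S \<longrightarrow> (\<exists>T. finite T \<and> T \<subseteq> S \<and> a \<le> Sup T)"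
    and b: "\<forall>S. b \<le> Sup S \<longrightarrow> (\<exists>T. finite T \<and> T \<subseteq> S \<and> b \<le> Sup T)"
    and ab: "sup a b \<le> Sup S"
  obtain T1 where T1: "finite T1" "T1 \<subseteq> S" "a \<le> Sup T1" using a ab by auto
  obtain T2 where T2: "finite T2" "T2 \<subseteq> S" "b \<le> Sup T2" using b ab by auto
  have "sup a b \<le> Sup (T1 \<union> T2)" using T1 T2 by (auto simp: Sup_union_distrib le_supI1 le_supI2)
  thus "\<exists>T. finite T \<and> T \<subseteq> S \<and> sup a b \<le> Sup T" using T1 T2 by (intro exI[of _ "T1 \<union> T2"]) auto
qed
lemma cp_Sup_fin: "finite T \<Longrightarrow> \<forall>t\<in>T. cp t \<Longrightarrow> cp (Sup T)"
  by (induction T rule: finite_induct) (auto simp: bot_cp cp_sup)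

lemma dom0: "prime_el mul bot" using dom unfolding lattice_domain_def by auto
lemma bot_ne_top: "bot \<noteq> (top::'a)" using dom0 unfolding prime_el_def by auto
lemma nozd: "a \<cdot> b = bot \<Longrightarrow> a = bot \<or> b = bot"
  using dom0 unfolding prime_el_def by (metis bot_unique order_refl)
lemma mul_ne_bot: "a \<noteq> bot \<Longrightarrow> b \<noteq> bot \<Longrightarrow> a \<cdot> b \<noteq> bot" using nozd by blast

lemma pr_meet: "pr x \<Longrightarrow> inf y (z \<cdot> x) = (inf (y \<div> x) z) \<cdot> x" unfolding principal_el_def by auto
lemma pr_join: "pr x \<Longrightarrow> sup y (z \<div> x) = (sup (y \<cdot> x) z) \<div> x" unfolding principal_el_def by auto
lemma pr_below: "pr x \<Longrightarrow> y \<le> x \<Longrightarrow> y = (y \<div> x) \<cdot> x"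
  using pr_meet[of x y top] by (simp add: inf_absorb1)
lemma res_bot: "x \<noteq> bot \<Longrightarrow> bot \<div> x = bot"
  using res_iff[of _ x bot] nozd by (metis bot_unique order_refl)
lemma cancel_res: "pr x \<Longrightarrow> x \<noteq> bot \<Longrightarrow> (y \<cdot> x) \<div> x = y"
  using pr_join[of x y bot] res_bot by simp
lemma cancel: "pr x \<Longrightarrow> x \<noteq> bot \<Longrightarrow> a \<cdot> x \<le> b \<cdot> x \<Longrightarrow> a \<le> b"
  by (metis cancel_res res_iff)
lemma cancel_eq: "pr x \<Longrightarrow> x \<noteq> bot \<Longrightarrow> a \<cdot> x = b \<cdot> x \<Longrightarrow> a = b"
  by (metis cancel order_refl antisym)
lemma pr_inf: "pr x \<Longrightarrow> x \<noteq> bot \<Longrightarrow> x \<cdot> (inf a b) = inf (x \<cdot> a) (x \<cdot> b)"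
  using pr_meet[of x "x \<cdot> a" b] cancel_res[of x a] by (simp add: comm)
lemma pr_mul: "pr a \<Longrightarrow> pr b \<Longrightarrow> pr (a \<cdot> b)"
  unfolding principal_el_def
proof (intro allI conjI)
  fix y z assume a: "\<forall>y z. inf y (z \<cdot> a) = inf (y \<div> a) z \<cdot> a \<and> sup y (z \<div> a) = sup (y \<cdot> a) z \<div> a"
    and b: "\<forall>y z. inf y (z \<cdot> b) = inf (y \<div> b) z \<cdot> b \<and> sup y (z \<div> b) = sup (y \<cdot> b) z \<div> b"
  have "inf y (z \<cdot> (a \<cdot> b)) = inf y ((z \<cdot> b) \<cdot> a)" by (simp add: ac)
  also have "\<dots> = inf (y \<div> a) (z \<cdot> b) \<cdot> a" using a by auto
  also have "\<dots> = inf ((y \<div> a) \<div> b) z \<cdot> b \<cdot> a" using b by auto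
  also have "\<dots> = inf (y \<div> (a \<cdot> b)) z \<cdot> (a \<cdot> b)" by (simp add: ac res_res)
  finally show "inf y (z \<cdot> (a \<cdot> b)) = inf (y \<div> (a \<cdot> b)) z \<cdot> (a \<cdot> b)" .
  have "sup y (z \<div> (a \<cdot> b)) = sup y ((z \<div> a) \<div> b)" by (simp add: res_res)
  also have "\<dots> = sup (y \<cdot> b) (z \<div> a) \<div> b" using b by auto
  also have "\<dots> = (sup (y \<cdot> b \<cdot> a) z \<div> a) \<div> b" using a by auto
  also have "\<dots> = sup (y \<cdot> (a \<cdot> b)) z \<div> (a \<cdot> b)" by (simp add: ac res_res)
  finally show "sup y (z \<div> (a \<cdot> b)) = sup (y \<cdot> (a \<cdot> b)) z \<div> (a \<cdot> b)" .
qed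
lemma pr_top: "pr top" unfolding principal_el_def
  by (metis inf_top.right_neutral mul_top order_refl res_iff antisym)
lemma pr_bot: "pr bot" unfolding principal_el_def
proof (intro allI conjI)
  fix y z :: 'a
  have "bot \<div> bot = top" using res_iff[of top bot bot] by (simp add: top_unique)
  moreover have "z \<div> bot = top" using res_iff[of top bot z] by (simp add: top_unique)
  moreover have "(sup (y \<cdot> bot) z) \<div> bot = top" using res_iff[of top bot] by (simp add: top_unique)
  ultimately show "inf y (z \<cdot> bot) = inf (y \<div> bot) z \<cdot> bot" "sup y (z \<div> bot) = sup (y \<cdot> bot) z \<div> bot" by simp_all
qed
primrec pw :: "'a \<Rightarrow> nat \<Rightarrow> 'a" where
  "pw a 0 = top" | "pw a (Suc n) = a \<cdot> pw a n"
lemma pr_pw: "pr a \<Longrightarrow> pr (pw a n)" by (induction n) (auto simp: pr_top pr_mul)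
lemma pw_add: "pw a (i + j) = pw a i \<cdot> pw a j" by (induction i) (auto simp: assoc)
lemma pw_mul: "pw (a \<cdot> b) n = pw a n \<cdot> pw b n" by (induction n) (auto simp: assoc lcomm)
lemma pw_pw: "pw (pw a i) j = pw a (i * j)" by (induction j) (auto simp: pw_add[symmetric] add.commute mult.commute)
lemma pw_ne_bot: "a \<noteq> bot \<Longrightarrow> pw a n \<noteq> bot" by (induction n) (auto simp: bot_ne_top[symmetric] mul_ne_bot)
lemma pw_mono: "a \<le> b \<Longrightarrow> pw a n \<le> pw b n" by (induction n) (auto intro: mono2)
lemma cp_pw: "cp a \<Longrightarrow> cp (pw a n)" by (induction n) (auto simp: top_cp cp_mul)

end


context SL begin

lemma pr_cp: "pr x \<Longrightarrow> cp x"
proof -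
  assume px: "pr x"
  define C where "C = {c. cp c \<and> c \<le> x}"
  have xC: "x = Sup C" using Sup_cp_below C_def by simp
  have cC: "\<forall>c\<in>C. (c \<div> x) \<cdot> x = c" using pr_below px C_def by auto
  define R where "R = (\<lambda>c. c \<div> x) ` C"
  have "Sup R \<cdot> x = Sup ((\<lambda>r. r \<cdot> x) ` R)" by (rule Sup_mul)
  also have "(\<lambda>r. r \<cdot> x) ` R = C" unfolding R_def image_image using cC by simp
  finally have RX: "Sup R \<cdot> x = x" using xC by simp
  have "sup (Sup R) (bot \<div> x) = (sup (Sup R \<cdot> x) bot) \<div> x" using pr_join px by blast
  also have "\<dots> = x \<div> x" using RX by simp
  also have "\<dots> = top" using res_iff[of top x x] top_unique by auto
  finally have "top \<le> Sup (insert (bot \<div> x) R)" by (simp add: sup_commute)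
  then obtain F where F: "finite F" "F \<subseteq> insert (bot \<div> x) R" "top \<le> Sup F"
    using top_cp unfolding compact_el_def by blast
  have "x \<le> Sup F \<cdot> x" using mono_l[OF F(3), of x] by simp
  also have "\<dots> = Sup ((\<lambda>f. f \<cdot> x) ` F)" by (rule Sup_mul)
  finally have x1: "x \<le> Sup ((\<lambda>f. f \<cdot> x) ` F)" .
  have el: "\<forall>g \<in> (\<lambda>f. f \<cdot> x) ` F. cp g \<and> g \<le> x"
  proof
    fix g assume "g \<in> (\<lambda>f. f \<cdot> x) ` F"
    then obtain f where f: "f \<in> F" "g = f \<cdot> x" by blast
    show "cp g \<and> g \<le> x"
    proof (cases "f = bot \<div> x")
      case True
      hence "g = bot" using f res_mul[of bot x] by (simp add: bot_unique)
      thus ?thesis using bot_cp by simp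
    next
      case False
      then obtain c where "c \<in> C" "f = c \<div> x" using f F(2) R_def by auto
      thus ?thesis using cC f C_def by auto
    qed
  qed
  hence "Sup ((\<lambda>f. f \<cdot> x) ` F) \<le> x" by (intro Sup_least) blast
  hence "x = Sup ((\<lambda>f. f \<cdot> x) ` F)" using x1 by (rule antisym[rotated])
  thus "cp x" using cp_Sup_fin[of "(\<lambda>f. f \<cdot> x) ` F"] F(1) el by simp
qed

lemma cp_fin_pr: "cp c \<Longrightarrow> \<exists>T. finite T \<and> (\<forall>t\<in>T. pr t \<and> t \<le> c) \<and> c = Sup T"
proof -
  assume c: "cp c"
  have "c \<le> Sup {p. pr p \<and> p \<le> c}" using Sup_pr_below by simp
  then obtain T where T: "finite T" "T \<subseteq> {p. pr p \<and> p \<le> c}" "c \<le> Sup T"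
    using c unfolding compact_el_def by blast
  have "Sup T \<le> c" using T(2) by (auto intro: Sup_least)
  thus ?thesis using T by (intro exI[of _ T]) auto
qed

lemma max_ne_top: "maximal_el m \<Longrightarrow> m \<noteq> top" unfolding maximal_el_def by auto

lemma max_prime: "maximal_el m \<Longrightarrow> x \<cdot> y \<le> m \<Longrightarrow> \<not> x \<le> m \<Longrightarrow> y \<le> m"
proof -
  assume m: "maximal_el m" and xy: "x \<cdot> y \<le> m" and x: "\<not> x \<le> m"
  have "m \<le> sup m x" by simp
  hence "sup m x = m \<or> sup m x = top" using m unfolding maximal_el_def by blast
  moreover have "sup m x \<noteq> m" using x by (metis sup.cobounded2)
  ultimately have "sup m x = top" by blast
  hence "y = sup (y \<cdot> m) (y \<cdot> x)" using mul_sup[of y m x] by simp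
  also have "\<dots> \<le> m" using xy mul_le_r[of y m] by (simp add: comm)
  finally show "y \<le> m" .
qed

lemma max_prime': "maximal_el m \<Longrightarrow> \<not> x \<le> m \<Longrightarrow> \<not> y \<le> m \<Longrightarrow> \<not> x \<cdot> y \<le> m"
  using max_prime by blast

lemma max_ne_bot: assumes "maximal_el (m::'a)" shows "m \<noteq> bot"
proof
  assume "m = bot"
  hence "\<forall>x::'a. x = bot \<or> x = top" using assms unfolding maximal_el_def by auto
  thus False using nt by blast
qed

lemma finite_chain_Sup: "finite (F::'a set) \<Longrightarrow> F \<noteq> {} \<Longrightarrow> \<forall>a\<in>F. \<forall>b\<in>F. a \<le> b \<or> b \<le> a \<Longrightarrow> Sup F \<in> F"
proof (induction F rule: finite_ne_induct)
  case (singleton x) thus ?case by simp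
next
  case (insert x F)
  hence "Sup F \<in> F" by auto
  hence "x \<le> Sup F \<or> Sup F \<le> x" using insert.prems by auto
  thus ?case using \<open>Sup F \<in> F\<close> by (auto simp: sup_absorb1 sup_absorb2)
qed

lemma ex_max: "(x::'a) \<noteq> top \<Longrightarrow> \<exists>m. maximal_el m \<and> x \<le> m"
proof -
  assume xt: "x \<noteq> top"
  define ds where "ds y = {z::'a. z \<le> y}" for y
  have ds_le: "ds a \<subseteq> ds b \<longleftrightarrow> a \<le> b" for a b unfolding ds_def by auto
  define A where "A = {ds y | y. x \<le> y \<and> y \<noteq> top}"
  have "\<exists>M\<in>A. \<forall>X\<in>A. M \<subseteq> X \<longrightarrow> X = M"
  proof (rule Zorn_Lemma2, intro ballI)
    fix Cs assume Cs: "Cs \<in> chains A"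
    define Y where "Y = {y. x \<le> y \<and> y \<noteq> top \<and> ds y \<in> Cs}"
    have chC: "\<forall>X\<in>Cs. \<forall>Z\<in>Cs. X \<subseteq> Z \<or> Z \<subseteq> X" using Cs unfolding chains_def chain_subset_def by blast
    have chY: "\<forall>a\<in>insert x Y. \<forall>b\<in>insert x Y. a \<le> b \<or> b \<le> a"
    proof (intro ballI)
      fix a b assume a: "a \<in> insert x Y" and b: "b \<in> insert x Y"
      show "a \<le> b \<or> b \<le> a"
      proof (cases "a = x \<or> b = x")
        case True thus ?thesis using a b unfolding Y_def by blast
      next
        case False
        hence "ds a \<in> Cs" "ds b \<in> Cs" using a b unfolding Y_def by auto
        hence "ds a \<subseteq> ds b \<or> ds b \<subseteq> ds a" using chC by blast
        thus ?thesis using ds_le by blast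
      qed
    qed
    have ntY: "\<forall>a\<in>insert x Y. a \<noteq> top" using xt Y_def by auto
    have "sup x (Sup Y) \<noteq> top"
    proof
      assume "sup x (Sup Y) = top"
      hence "top \<le> Sup (insert x Y)" by simp
      then obtain F where F: "finite F" "F \<subseteq> insert x Y" "top \<le> Sup F"
        using top_cp unfolding compact_el_def by blast
      have "F \<noteq> {}" using F(3) bot_ne_top by (auto simp: top_unique)
      hence "Sup F \<in> F" using finite_chain_Sup[OF F(1)] chY F(2) by blast
      thus False using F ntY by (auto simp: top_unique)
    qed
    moreover have "x \<le> sup x (Sup Y)" by simp
    ultimately have inA: "ds (sup x (Sup Y)) \<in> A" unfolding A_def by blast
    have "\<forall>X\<in>Cs. X \<subseteq> ds (sup x (Sup Y))"
    proof
      fix X assume X: "X \<in> Cs"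
      then obtain y where y: "X = ds y" "x \<le> y" "y \<noteq> top" using Cs unfolding chains_def A_def by auto
      hence "y \<in> Y" using X Y_def by auto
      hence "y \<le> sup x (Sup Y)" by (simp add: Sup_upper le_supI2)
      thus "X \<subseteq> ds (sup x (Sup Y))" using y ds_le by auto
    qed
    thus "\<exists>U\<in>A. \<forall>X\<in>Cs. X \<subseteq> U" using inA by blast
  qed
  then obtain M where M: "M \<in> A" "\<forall>X\<in>A. M \<subseteq> X \<longrightarrow> X = M" by blast
  then obtain m where m: "M = ds m" "x \<le> m" "m \<noteq> top" unfolding A_def by auto
  have "maximal_el m" unfolding maximal_el_def
  proof (intro conjI allI impI)
    show "m \<noteq> top" by fact
    fix z assume mz: "m \<le> z"
    show "z = m \<or> z = top"
    proof (cases "z = top")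
      case False
      hence "ds z \<in> A" using mz m A_def order_trans by blast
      hence "ds z = ds m" using M m mz ds_le by auto
      thus ?thesis using ds_le by (metis antisym order_refl)
    qed simp
  qed
  thus ?thesis using m by blast
qed

lemma LG: "(\<And>m. maximal_el m \<Longrightarrow> \<exists>s. cp s \<and> \<not> s \<le> m \<and> s \<cdot> e \<le> b) \<Longrightarrow> e \<le> b"
proof -
  assume H: "\<And>m. maximal_el m \<Longrightarrow> \<exists>s. cp s \<and> \<not> s \<le> m \<and> s \<cdot> e \<le> b"
  have "b \<div> e = top"
  proof (rule ccontr)
    assume "b \<div> e \<noteq> top"
    then obtain m where m: "maximal_el m" "b \<div> e \<le> m" using ex_max by blast
    then obtain s where "\<not> s \<le> m" "s \<cdot> e \<le> b" using H by blast
    thus False using m res_iff by (meson order_trans)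
  qed
  thus ?thesis using res_iff[of top e b] by simp
qed

lemma FG_cancel: "a \<cdot> b = p \<Longrightarrow> pr p \<Longrightarrow> p \<noteq> bot \<Longrightarrow> b \<cdot> s \<le> b \<cdot> t \<Longrightarrow> s \<le> t"
proof -
  assume ab: "a \<cdot> b = p" and p: "pr p" "p \<noteq> bot" and le: "b \<cdot> s \<le> b \<cdot> t"
  have "s \<cdot> p \<le> t \<cdot> p" using mono_r[OF le, of a] by (simp add: ab[symmetric] ac)
  thus ?thesis using cancel p by blast
qed

lemma FG: "a \<cdot> b = p \<Longrightarrow> pr p \<Longrightarrow> p \<noteq> bot \<Longrightarrow> pr a"
  unfolding principal_el_def[of mul a]
proof (intro allI conjI)
  fix y z
  assume ab: "a \<cdot> b = p" and p: "pr p" "p \<noteq> bot"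
  note cb = FG_cancel[OF ab p]
  show "inf y (z \<cdot> a) = inf (y \<div> a) z \<cdot> a"
  proof (rule antisym)
    define w where "w = inf y (z \<cdot> a)"
    define u where "u = inf ((b \<cdot> y) \<div> p) z"
    have "b \<cdot> w \<le> b \<cdot> y" by (rule mono_r) (simp add: w_def)
    moreover have "b \<cdot> w \<le> b \<cdot> (z \<cdot> a)" by (rule mono_r) (simp add: w_def)
    moreover have "b \<cdot> (z \<cdot> a) = z \<cdot> p" by (simp add: ab[symmetric] ac)
    ultimately have "b \<cdot> w \<le> inf (b \<cdot> y) (z \<cdot> p)" by simp
    also have "\<dots> = u \<cdot> p" unfolding u_def using pr_meet[OF p(1)] by blast
    also have "\<dots> = b \<cdot> (u \<cdot> a)" by (simp add: ab[symmetric] ac)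
    finally have w1: "w \<le> u \<cdot> a" using cb by blast
    have "b \<cdot> (u \<cdot> a) \<le> b \<cdot> y"
    proof -
      have "u \<le> (b \<cdot> y) \<div> p" unfolding u_def by simp
      hence "u \<cdot> p \<le> b \<cdot> y" using res_iff by blast
      thus ?thesis by (simp add: ab[symmetric] ac)
    qed
    hence "u \<cdot> a \<le> y" using cb by blast
    hence "u \<le> inf (y \<div> a) z" using res_iff u_def by auto
    hence "u \<cdot> a \<le> inf (y \<div> a) z \<cdot> a" by (rule mono_l)
    thus "inf y (z \<cdot> a) \<le> inf (y \<div> a) z \<cdot> a" using w1 w_def by simp
  next
    have "inf (y \<div> a) z \<cdot> a \<le> y" using res_mul[of y a] mono_l[of "inf (y \<div> a) z" "y \<div> a" a] by auto
    moreover have "inf (y \<div> a) z \<cdot> a \<le> z \<cdot> a" by (rule mono_l) simp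
    ultimately show "inf (y \<div> a) z \<cdot> a \<le> inf y (z \<cdot> a)" by simp
  qed
  show "sup y (z \<div> a) = sup (y \<cdot> a) z \<div> a"
  proof (rule antisym)
    have "y \<le> sup (y \<cdot> a) z \<div> a" by (simp add: res_iff[symmetric])
    moreover have "z \<div> a \<le> sup (y \<cdot> a) z \<div> a" using res_iff res_mul[of z a] by (meson le_supI2 order_refl)
    ultimately show "sup y (z \<div> a) \<le> sup (y \<cdot> a) z \<div> a" by simp
  next
    define w where "w = sup (y \<cdot> a) z \<div> a"
    have "w \<cdot> a \<le> sup (y \<cdot> a) z" using res_mul w_def by blast
    hence "w \<cdot> a \<cdot> b \<le> sup (y \<cdot> a) z \<cdot> b" by (rule mono_l)
    hence "w \<cdot> (a \<cdot> b) \<le> sup (y \<cdot> (a \<cdot> b)) (z \<cdot> b)" by (simp add: sup_mul assoc)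
    hence "w \<cdot> p \<le> sup (y \<cdot> p) (z \<cdot> b)" by (simp add: ab)
    hence "w \<le> sup (y \<cdot> p) (z \<cdot> b) \<div> p" using res_iff by blast
    also have "\<dots> = sup y ((z \<cdot> b) \<div> p)" using pr_join[OF p(1)] by simp
    also have "(z \<cdot> b) \<div> p \<le> z \<div> a"
    proof -
      have "((z \<cdot> b) \<div> p) \<cdot> p \<le> z \<cdot> b" by (rule res_mul)
      hence "b \<cdot> (((z \<cdot> b) \<div> p) \<cdot> a) \<le> b \<cdot> z" by (simp add: ab[symmetric] ac)
      hence "((z \<cdot> b) \<div> p) \<cdot> a \<le> z" using cb by blast
      thus ?thesis using res_iff by blast
    qed
    hence "sup y ((z \<cdot> b) \<div> p) \<le> sup y (z \<div> a)" by (simp add: le_supI2)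
    finally show "sup (y \<cdot> a) z \<div> a \<le> sup y (z \<div> a)" using w_def by simp
  qed
qed

end


context SL begin

lemma shp: "a1 \<cdot> a2 \<le> b \<Longrightarrow> \<exists>b1 b2. a1 \<le> b1 \<and> a2 \<le> b2 \<and> b = b1 \<cdot> b2"
  using sh unfolding sharp_def by blast

lemma pr_meet1: "pr x \<Longrightarrow> inf y x = (y \<div> x) \<cdot> x"
  using pr_meet[of x y top] by simp

lemma sq_le: "sup x y \<cdot> sup x y \<le> sup (sup x y \<cdot> x) (y \<cdot> y)"
proof -
  have "sup x y \<cdot> sup x y = sup (sup x y \<cdot> x) (sup (x \<cdot> y) (y \<cdot> y))" by (simp add: mul_sup sup_mul)
  moreover have "x \<cdot> y \<le> sup x y \<cdot> x" using mono_l[of y "sup x y" x] by (simp add: comm)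
  ultimately show ?thesis by (simp add: le_supI1 le_supI2 sup.coboundedI1)
qed

lemma lemX: "pr x \<Longrightarrow> pr y \<Longrightarrow> x \<noteq> bot \<Longrightarrow> y \<noteq> bot \<Longrightarrow> inf x y = x \<cdot> y \<Longrightarrow> sup x y \<noteq> top \<Longrightarrow> False"
proof -
  assume px: "pr x" and py: "pr y" and x0: "x \<noteq> bot" and y0: "y \<noteq> bot"
    and ixy: "inf x y = x \<cdot> y" and st: "sup x y \<noteq> top"
  have sq: "sup x y \<cdot> sup x y \<le> sup x (y \<cdot> y)"
  proof -
    have "sup x y \<cdot> sup x y = sup (x \<cdot> sup x y) (sup (y \<cdot> x) (y \<cdot> y))" by (simp add: mul_sup sup_mul ac sup.assoc sup.commute sup.left_commute)
    moreover have "x \<cdot> sup x y \<le> x" by (rule mul_le_l)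
    moreover have "y \<cdot> x \<le> x" by (rule mul_le_r)
    ultimately show ?thesis by (simp add: le_supI1 le_supI2)
  qed
  obtain b1 b2 where b: "sup x y \<le> b1" "sup x y \<le> b2" "sup x (y \<cdot> y) = b1 \<cdot> b2"
    using shp[OF sq] by blast
  have "(x \<div> y) \<cdot> y = x \<cdot> y" using pr_meet1[OF py, of x] ixy by simp
  hence xy: "x \<div> y = x" using cancel_eq[OF py y0] by blast
  have jy: "(sup (y \<cdot> y) x) \<div> y = sup y x" using pr_join[OF py, of y x] xy by simp
  have "b2 \<cdot> y \<le> b2 \<cdot> b1" using b(1) mono_r[of y b1 b2] by simp
  also have "\<dots> = sup (y \<cdot> y) x" using b(3) by (simp add: comm sup_commute)
  finally have b2le: "b2 \<le> sup x y" using res_iff jy by (metis sup_commute)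
  have "b1 \<cdot> y \<le> b1 \<cdot> b2" using b(2) mono_r[of y b2 b1] by simp
  also have "\<dots> = sup (y \<cdot> y) x" using b(3) by (simp add: sup_commute)
  finally have b1le: "b1 \<le> sup x y" using res_iff jy by (metis sup_commute)
  have "top \<cdot> x \<le> sup x (y \<cdot> y)" by simp
  also have "\<dots> = b1 \<cdot> b2" by (rule b(3))
  also have "\<dots> \<le> sup x y \<cdot> sup x y" using b1le b2le by (rule mono2)
  also have "\<dots> \<le> sup (sup x y \<cdot> x) (y \<cdot> y)" by (rule sq_le)
  finally have "top \<le> sup (sup x y \<cdot> x) (y \<cdot> y) \<div> x" using res_iff by blast
  also have "\<dots> = sup (sup x y) ((y \<cdot> y) \<div> x)" using pr_join[OF px] by simp
  also have "(y \<cdot> y) \<div> x \<le> y \<cdot> y"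
  proof -
    have "((y \<cdot> y) \<div> x) \<cdot> x = inf (y \<cdot> y) x" using pr_meet1[OF px] by simp
    also have "\<dots> \<le> inf (y \<cdot> y) (x \<cdot> y)"
      using ixy mul_le_l[of y y] by (metis inf.mono inf_le1 inf_le2 le_inf_iff order_refl order_trans)
    also have "\<dots> = y \<cdot> inf y x" using pr_inf[OF py y0, of y x] by (simp add: comm)
    also have "\<dots> = (y \<cdot> y) \<cdot> x" using ixy by (simp add: inf_commute ac)
    finally show ?thesis using cancel[OF px x0] by blast
  qed
  hence "sup (sup x y) ((y \<cdot> y) \<div> x) \<le> sup x y" using mul_le_l[of y y] by (meson le_sup_iff order_trans order_refl)
  finally show False using st by (simp add: top_unique)
qed

definition lle :: "'a \<Rightarrow> 'a \<Rightarrow> 'a \<Rightarrow> bool" where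
  "lle m a b \<longleftrightarrow> (\<exists>s. cp s \<and> \<not> s \<le> m \<and> s \<cdot> a \<le> b)"

lemma lle_refl: "maximal_el m \<Longrightarrow> lle m a a"
  unfolding lle_def using top_cp max_ne_top by (metis top_mul order_refl top_unique)

lemma lle_le: "maximal_el m \<Longrightarrow> a \<le> b \<Longrightarrow> lle m a b"
  unfolding lle_def using top_cp max_ne_top by (metis top_mul top_unique)

lemma chain: "maximal_el m \<Longrightarrow> pr x \<Longrightarrow> pr y \<Longrightarrow> lle m x y \<or> lle m y x"
proof -
  assume m: "maximal_el m" and px: "pr x" and py: "pr y"
  show ?thesis
  proof (cases "x = bot \<or> y = bot")
    case True thus ?thesis using lle_le[OF m] by auto
  next
    case False
    hence x0: "x \<noteq> bot" and y0: "y \<noteq> bot" by auto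
    have pxy: "pr (x \<cdot> y)" and xy0: "x \<cdot> y \<noteq> bot" using pr_mul px py mul_ne_bot x0 y0 by auto
    have "sup x y \<cdot> inf x y \<le> x \<cdot> y"
    proof -
      have "sup x y \<cdot> inf x y = sup (x \<cdot> inf x y) (y \<cdot> inf x y)" by (simp add: sup_mul)
      moreover have "x \<cdot> inf x y \<le> x \<cdot> y" by (rule mono_r) simp
      moreover have "y \<cdot> inf x y \<le> x \<cdot> y" using mono_r[of "inf x y" x y] by (simp add: comm)
      ultimately show ?thesis by simp
    qed
    then obtain z w where zw: "sup x y \<le> z" "inf x y \<le> w" "x \<cdot> y = z \<cdot> w" using shp by blast
    have pz: "pr z" using FG[of z w "x \<cdot> y"] zw(3) pxy xy0 by simp
    have z0: "z \<noteq> bot" using zw(3) xy0 by auto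
    define x' where "x' = x \<div> z"
    define y' where "y' = y \<div> z"
    have xx: "x = x' \<cdot> z" using pr_below[OF pz, of x] zw(1) x'_def by simp
    have yy: "y = y' \<cdot> z" using pr_below[OF pz, of y] zw(1) y'_def by simp
    have px': "pr x'" using FG[of x' z x] xx px x0 by simp
    have py': "pr y'" using FG[of y' z y] yy py y0 by simp
    have x'0: "x' \<noteq> bot" and y'0: "y' \<noteq> bot" using xx yy x0 y0 by auto
    have "w \<cdot> z = (z \<cdot> x' \<cdot> y') \<cdot> z" using zw(3) xx yy by (simp add: ac)
    hence ww: "w = z \<cdot> x' \<cdot> y'" using cancel_eq[OF pz z0] by blast
    have "z \<cdot> inf x' y' = inf x y" using pr_inf[OF pz z0] xx yy by (simp add: comm)
    also have "\<dots> \<le> z \<cdot> (x' \<cdot> y')" using zw(2) ww by (simp add: ac)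
    finally have "inf x' y' \<le> x' \<cdot> y'" using cancel[OF pz z0] by (simp add: comm)
    hence ixy': "inf x' y' = x' \<cdot> y'" using mul_le_l[of x' y'] mul_le_r[of x' y'] by (simp add: antisym)
    show ?thesis
    proof (cases "x' \<le> m \<and> y' \<le> m")
      case True
      hence "sup x' y' \<noteq> top" using max_ne_top[OF m] by (metis le_supI top_unique)
      thus ?thesis using lemX[OF px' py' x'0 y'0 ixy'] by blast
    next
      case False
      show ?thesis
      proof (cases "x' \<le> m")
        case False
        have "x' \<cdot> y = y' \<cdot> x" using xx yy by (simp add: ac)
        also have "\<dots> \<le> x" by (rule mul_le_r)
        finally have "lle m y x" unfolding lle_def using False pr_cp[OF px'] by blast
        thus ?thesis by blast
      next
        case True
        hence ny: "\<not> y' \<le> m" using False by blast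
        have "y' \<cdot> x = x' \<cdot> y" using xx yy by (simp add: ac)
        also have "\<dots> \<le> y" by (rule mul_le_r)
        finally have "lle m x y" unfolding lle_def using ny pr_cp[OF py'] by blast
        thus ?thesis by blast
      qed
    qed
  qed
qed

lemma pr_sup: "pr x \<Longrightarrow> pr y \<Longrightarrow> pr (sup x y)"
proof -
  assume px: "pr x" and py: "pr y"
  show ?thesis
  proof (cases "x = bot \<or> y = bot")
    case True thus ?thesis using px py by auto
  next
    case False
    hence x0: "x \<noteq> bot" and y0: "y \<noteq> bot" by auto
    have pxy: "pr (x \<cdot> y)" and xy0: "x \<cdot> y \<noteq> bot" using pr_mul px py mul_ne_bot x0 y0 by auto
    have le1: "sup x y \<cdot> inf x y \<le> x \<cdot> y"
    proof -
      have "sup x y \<cdot> inf x y = sup (x \<cdot> inf x y) (y \<cdot> inf x y)" by (simp add: sup_mul)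
      moreover have "x \<cdot> inf x y \<le> x \<cdot> y" by (rule mono_r) simp
      moreover have "y \<cdot> inf x y \<le> x \<cdot> y" using mono_r[of "inf x y" x y] by (simp add: comm)
      ultimately show ?thesis by simp
    qed
    have le2: "x \<cdot> y \<le> sup x y \<cdot> inf x y"
    proof (rule LG)
      fix m :: 'a assume m: "maximal_el m"
      from chain[OF m px py] show "\<exists>s. cp s \<and> \<not> s \<le> m \<and> s \<cdot> (x \<cdot> y) \<le> sup x y \<cdot> inf x y"
      proof
        assume "lle m x y"
        then obtain s where s: "cp s" "\<not> s \<le> m" "s \<cdot> x \<le> y" unfolding lle_def by blast
        have "s \<cdot> x \<le> inf x y" using s(3) mul_le_r[of s x] by simp
        hence "s \<cdot> x \<cdot> y \<le> inf x y \<cdot> sup x y" by (rule mono2) simp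
        thus ?thesis using s by (intro exI[of _ s]) (simp add: ac)
      next
        assume "lle m y x"
        then obtain s where s: "cp s" "\<not> s \<le> m" "s \<cdot> y \<le> x" unfolding lle_def by blast
        have "s \<cdot> y \<le> inf x y" using s(3) mul_le_r[of s y] by simp
        hence "s \<cdot> y \<cdot> x \<le> inf x y \<cdot> sup x y" by (rule mono2) simp
        thus ?thesis using s by (intro exI[of _ s]) (simp add: ac)
      qed
    qed
    have "sup x y \<cdot> inf x y = x \<cdot> y" using le1 le2 by (rule antisym)
    thus ?thesis using FG pxy xy0 by blast
  qed
qed

lemma pr_Sup_fin: "finite T \<Longrightarrow> \<forall>t\<in>T. pr t \<Longrightarrow> pr (Sup T)"
  by (induction T rule: finite_induct) (auto simp: pr_bot pr_sup)

lemma cp_pr: "cp c \<Longrightarrow> pr c"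
  using cp_fin_pr pr_Sup_fin by metis

end


context SL begin

abbreviation lc :: "'a \<Rightarrow> 'a \<Rightarrow> 'a" where "lc m x \<equiv> loc mul m x"

lemma s_ne_bot: "maximal_el (m::'a) \<Longrightarrow> \<not> s \<le> m \<Longrightarrow> s \<noteq> bot" by auto

lemma lle_trans: "maximal_el m \<Longrightarrow> lle m a b \<Longrightarrow> lle m b c \<Longrightarrow> lle m a c"
proof -
  assume m: "maximal_el m" and ab: "lle m a b" and bc: "lle m b c"
  obtain s where s: "cp s" "\<not> s \<le> m" "s \<cdot> a \<le> b" using ab lle_def by blast
  obtain t where t: "cp t" "\<not> t \<le> m" "t \<cdot> b \<le> c" using bc lle_def by blast
  have "t \<cdot> s \<cdot> a \<le> c" using mono_r[OF s(3), of t] t(3) by (simp add: assoc)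
  thus ?thesis unfolding lle_def using cp_mul[OF t(1) s(1)] max_prime'[OF m t(2) s(2)] by blast
qed

lemma lle_sup: "maximal_el m \<Longrightarrow> lle m a c \<Longrightarrow> lle m b c \<Longrightarrow> lle m (sup a b) c"
proof -
  assume m: "maximal_el m" and h1: "lle m a c" and bc: "lle m b c"
  obtain s where s: "cp s" "\<not> s \<le> m" "s \<cdot> a \<le> c" using h1 lle_def by blast
  obtain t where t: "cp t" "\<not> t \<le> m" "t \<cdot> b \<le> c" using bc lle_def by blast
  have "t \<cdot> s \<cdot> a \<le> c" using mul_le_r[of t "s \<cdot> a"] s(3) by (simp add: assoc)
  moreover have "t \<cdot> s \<cdot> b \<le> c"
  proof -
    have "t \<cdot> s \<cdot> b = s \<cdot> (t \<cdot> b)" by (simp add: ac)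
    thus ?thesis using mul_le_r[of s "t \<cdot> b"] t(3) by simp
  qed
  ultimately have "t \<cdot> s \<cdot> sup a b \<le> c" by (simp add: mul_sup)
  thus ?thesis unfolding lle_def using cp_mul[OF t(1) s(1)] max_prime'[OF m t(2) s(2)] by blast
qed

lemma lle_mul: "lle m a b \<Longrightarrow> lle m (a \<cdot> c) (b \<cdot> c)"
  unfolding lle_def by (metis assoc mono_l)

lemma lle_mul2: "maximal_el m \<Longrightarrow> lle m a b \<Longrightarrow> lle m c d \<Longrightarrow> lle m (a \<cdot> c) (b \<cdot> d)"
proof -
  assume m: "maximal_el m" "lle m a b" "lle m c d"
  hence "lle m (a \<cdot> c) (b \<cdot> c)" "lle m (c \<cdot> b) (d \<cdot> b)" using lle_mul by auto
  thus ?thesis using lle_trans[OF m(1)] by (simp add: comm)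
qed

lemma lle_cancel: "pr c \<Longrightarrow> c \<noteq> bot \<Longrightarrow> lle m (a \<cdot> c) (b \<cdot> c) \<Longrightarrow> lle m a b"
  unfolding lle_def using cancel by (metis assoc)

lemma lle_bot: "maximal_el m \<Longrightarrow> lle m a bot \<Longrightarrow> a = bot"
  unfolding lle_def using nozd bot_unique by (metis s_ne_bot)

lemma lle_top_unit: "lle m top q \<Longrightarrow> \<not> q \<le> m"
  unfolding lle_def by (metis mul_top order_trans)

lemma le_loc: "maximal_el m \<Longrightarrow> x \<le> lc m x"
proof -
  assume m: "maximal_el m"
  have nt: "\<not> (top::'a) \<le> m" using max_ne_top[OF m] by (simp add: top_unique)
  have "{c. cp c \<and> c \<le> x} \<subseteq> {a. cp a \<and> (\<exists>s. cp s \<and> \<not> s \<le> m \<and> a \<cdot> s \<le> x)}"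
  proof
    fix c assume c: "c \<in> {c. cp c \<and> c \<le> x}"
    hence "c \<cdot> top \<le> x" by simp
    thus "c \<in> {a. cp a \<and> (\<exists>s. cp s \<and> \<not> s \<le> m \<and> a \<cdot> s \<le> x)}" using c top_cp nt by blast
  qed
  hence "Sup {c. cp c \<and> c \<le> x} \<le> lc m x" unfolding loc_def by (rule Sup_subset_mono)
  thus ?thesis using Sup_cp_below[of x] by simp
qed

lemma loc_mono: "x \<le> y \<Longrightarrow> lc m x \<le> lc m y"
  unfolding loc_def by (rule Sup_subset_mono) (auto intro: order_trans)

lemma lle_fin: assumes m: "maximal_el m" shows "finite T \<Longrightarrow> \<forall>t\<in>T. lle m t y \<Longrightarrow> lle m (Sup T) y"
proof (induction T rule: finite_induct)
  case empty thus ?case using lle_le[OF m] by simp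
next
  case (insert a T) thus ?case using lle_sup[OF m] by auto
qed

lemma cp_le_loc: "maximal_el m \<Longrightarrow> cp c \<Longrightarrow> c \<le> lc m y \<longleftrightarrow> lle m c y"
proof
  assume m: "maximal_el m" and c: "cp c" and cy: "c \<le> lc m y"
  obtain T where T: "finite T" "T \<subseteq> {a. cp a \<and> (\<exists>s. cp s \<and> \<not> s \<le> m \<and> a \<cdot> s \<le> y)}" "c \<le> Sup T"
    using c[unfolded compact_el_def, rule_format, OF cy[unfolded loc_def]] by blast
  have "\<forall>t\<in>T. lle m t y" using T(2) unfolding lle_def by (auto simp: comm)
  hence "lle m (Sup T) y" using lle_fin m T(1) by blast
  thus "lle m c y" using lle_trans[OF m lle_le[OF m T(3)]] by blast
next
  assume m: "maximal_el m" and c: "cp c" and cy: "lle m c y"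
  thus "c \<le> lc m y" unfolding loc_def lle_def by (auto intro!: Sup_upper simp: comm)
qed

lemma pr_le_loc: "maximal_el m \<Longrightarrow> pr p \<Longrightarrow> p \<le> lc m y \<longleftrightarrow> lle m p y"
  using cp_le_loc pr_cp by blast

lemma loc_idem: "maximal_el m \<Longrightarrow> lc m (lc m y) = lc m y"
proof (rule antisym)
  assume m: "maximal_el m"
  show "lc m (lc m y) \<le> lc m y" unfolding loc_def[of _ _ "lc m y"]
  proof (rule Sup_least, clarify)
    fix a s assume a: "cp a" "cp s" "\<not> s \<le> m" "a \<cdot> s \<le> lc m y"
    hence "lle m (a \<cdot> s) y" using cp_le_loc[OF m] cp_mul by blast
    then obtain t where t: "cp t" "\<not> t \<le> m" "t \<cdot> (a \<cdot> s) \<le> y" unfolding lle_def by blast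
    have "(t \<cdot> s) \<cdot> a \<le> y" using t(3) by (simp add: ac)
    hence "lle m a y" unfolding lle_def using cp_mul[OF t(1) a(2)] max_prime'[OF m t(2) a(3)] by blast
    thus "a \<le> lc m y" using cp_le_loc[OF m a(1)] by blast
  qed
next
  assume m: "maximal_el m"
  show "lc m y \<le> lc m (lc m y)" using le_loc[OF m] by blast
qed

lemma carrier_loc: "maximal_el m \<Longrightarrow> x \<in> loc_carrier mul m \<Longrightarrow> lc m x = x"
  unfolding loc_carrier_def using loc_idem by auto

lemma loc_bot: "maximal_el m \<Longrightarrow> lc m bot = bot"
  unfolding loc_def using s_ne_bot nozd by (auto intro!: Sup_eqI simp: bot_unique)

lemma loc_mul_le: "maximal_el m \<Longrightarrow> lc m x \<cdot> lc m y \<le> lc m (x \<cdot> y)"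
proof -
  assume m: "maximal_el m"
  have "lc m x \<cdot> lc m y = Sup {a \<cdot> b |a b. a \<in> {a. cp a \<and> (\<exists>s. cp s \<and> \<not> s \<le> m \<and> a \<cdot> s \<le> x)}
      \<and> b \<in> {a. cp a \<and> (\<exists>s. cp s \<and> \<not> s \<le> m \<and> a \<cdot> s \<le> y)}}"
    unfolding loc_def by (rule Sup_mul_Sup)
  also have "\<dots> \<le> lc m (x \<cdot> y)"
  proof (rule Sup_least, clarify)
    fix a b s t assume ab: "cp a" "cp s" "\<not> s \<le> m" "a \<cdot> s \<le> x" "cp b" "cp t" "\<not> t \<le> m" "b \<cdot> t \<le> y"
    have "lle m a x" "lle m b y" using ab unfolding lle_def by (auto simp: comm)
    hence "lle m (a \<cdot> b) (x \<cdot> y)" using lle_mul2[OF m] by blast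
    thus "a \<cdot> b \<le> lc m (x \<cdot> y)" using cp_le_loc[OF m] cp_mul ab by blast
  qed
  finally show ?thesis .
qed

lemma loc_loc_mul: "maximal_el m \<Longrightarrow> lc m (lc m x \<cdot> lc m y) = lc m (x \<cdot> y)"
proof (rule antisym)
  assume m: "maximal_el m"
  show "lc m (lc m x \<cdot> lc m y) \<le> lc m (x \<cdot> y)"
    using loc_mono[OF loc_mul_le[OF m]] loc_idem[OF m] by metis
  show "lc m (x \<cdot> y) \<le> lc m (lc m x \<cdot> lc m y)"
    by (rule loc_mono, rule mono2) (use le_loc[OF m] in auto)
qed

lemma FCfin: assumes m: "maximal_el m" shows "finite T \<Longrightarrow> \<forall>t\<in>T. pr t \<Longrightarrow> Sup T = bot \<or> (\<exists>t\<in>T. t \<noteq> bot \<and> lle m (Sup T) t)"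
proof (induction T rule: finite_induct)
  case empty thus ?case by simp
next
  case (insert a T)
  have pa: "pr a" using insert.prems by auto
  from insert.IH insert.prems have IH: "Sup T = bot \<or> (\<exists>t\<in>T. t \<noteq> bot \<and> lle m (Sup T) t)" by auto
  show ?case
  proof (cases "Sup T = bot")
    case True
    hence "Sup (insert a T) = a" by (simp only: Sup_insert sup_bot_right)
    thus ?thesis using lle_refl[OF m, of a] by (cases "a = bot") auto
  next
    case False
    then obtain t where t: "t \<in> T" "t \<noteq> bot" "lle m (Sup T) t" using IH by blast
    have pt: "pr t" using insert.prems t(1) by auto
    from chain[OF m pa pt] show ?thesis
    proof
      assume "lle m a t"
      hence "lle m (sup a (Sup T)) t" using lle_sup[OF m] t(3) by blast
      thus ?thesis using t by auto
    next
      assume at: "lle m t a"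
      have a0: "a \<noteq> bot" using at t(2) lle_bot[OF m] by blast
      have "lle m (Sup T) a" using lle_trans[OF m t(3) at] .
      hence "lle m (sup a (Sup T)) a" using lle_sup[OF m lle_refl[OF m]] by blast
      thus ?thesis using a0 by auto
    qed
  qed
qed

lemma FC: "maximal_el m \<Longrightarrow> cp e \<Longrightarrow> e \<noteq> bot \<Longrightarrow> \<forall>t\<in>S. pr t \<Longrightarrow> e \<le> Sup S \<Longrightarrow> \<exists>t\<in>S. t \<noteq> bot \<and> lle m e t"
proof -
  assume m: "maximal_el m" and e: "cp e" "e \<noteq> bot" and S: "\<forall>t\<in>S. pr t" and eS: "e \<le> Sup S"
  obtain T where T: "finite T" "T \<subseteq> S" "e \<le> Sup T" using e eS unfolding compact_el_def by blast
  have "Sup T = bot \<or> (\<exists>t\<in>T. t \<noteq> bot \<and> lle m (Sup T) t)" using FCfin[OF m T(1)] S T(2) by blast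
  thus ?thesis
  proof
    assume h: "Sup T = bot"
    have "e = bot" using T(3) unfolding h by (rule bot_unique[THEN iffD1])
    thus ?thesis using e(2) by blast
  next
    assume "\<exists>t\<in>T. t \<noteq> bot \<and> lle m (Sup T) t"
    then obtain t where "t \<in> T" "t \<noteq> bot" "lle m (Sup T) t" by blast
    thus ?thesis using T lle_trans[OF m lle_le[OF m T(3)]] by blast
  qed
qed

lemma division: "maximal_el m \<Longrightarrow> pr p \<Longrightarrow> pr q \<Longrightarrow> q \<noteq> bot \<Longrightarrow> lle m p q \<Longrightarrow>
   \<exists>r. pr r \<and> lle m p (r \<cdot> q) \<and> r \<cdot> q \<le> p"
proof -
  assume m: "maximal_el m" and p: "pr p" and q: "pr q" "q \<noteq> bot" and pq: "lle m p q"
  show ?thesis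
  proof (cases "p = bot")
    case True thus ?thesis using pr_bot lle_refl[OF m, of bot] by (intro exI[of _ bot]) auto
  next
    case False
    obtain s where s: "cp s" "\<not> s \<le> m" "s \<cdot> p \<le> q" using pq lle_def by blast
    define u where "u = (s \<cdot> p) \<div> q"
    have uq: "u \<cdot> q = s \<cdot> p" using pr_below[OF q(1) s(3)] u_def by simp
    define R where "R = {r. pr r \<and> r \<le> u}"
    have "s \<cdot> p = Sup R \<cdot> q" using uq Sup_pr_below[of u] R_def by simp
    also have "\<dots> = Sup ((\<lambda>r. r \<cdot> q) ` R)" by (rule Sup_mul)
    finally have sp: "s \<cdot> p \<le> Sup ((\<lambda>r. r \<cdot> q) ` R)" by simp
    have sp0: "s \<cdot> p \<noteq> bot" using mul_ne_bot s_ne_bot[OF m s(2)] False by blast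
    have "\<forall>t\<in>(\<lambda>r. r \<cdot> q) ` R. pr t" using R_def pr_mul q(1) by auto
    then obtain t where t: "t \<in> (\<lambda>r. r \<cdot> q) ` R" "lle m (s \<cdot> p) t"
      using FC[OF m cp_mul[OF s(1) pr_cp[OF p]] sp0 _ sp] by blast
    then obtain r where r: "r \<in> R" "t = r \<cdot> q" by blast
    have "lle m p (s \<cdot> p)" unfolding lle_def using s by blast
    hence "lle m p (r \<cdot> q)" using lle_trans[OF m _ t(2)] r by blast
    moreover have "r \<cdot> q \<le> p" using r R_def uq mono_l[of r u q] mul_le_r[of s p] by auto
    ultimately show ?thesis using r R_def by blast
  qed
qed

end


context SL begin

lemma FL: "maximal_el m \<Longrightarrow> pr g \<Longrightarrow> g \<noteq> bot \<Longrightarrow> lc m g = b1 \<cdot> b2 \<Longrightarrow>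
  \<exists>\<beta>. pr \<beta> \<and> \<beta> \<le> b1 \<and> b1 \<le> lc m \<beta>"
proof -
  assume m: "maximal_el m" and g: "pr g" "g \<noteq> bot" and gb: "lc m g = b1 \<cdot> b2"
  define P1 where "P1 = {p. pr p \<and> p \<le> b1}"
  define P2 where "P2 = {p. pr p \<and> p \<le> b2}"
  have "g \<le> b1 \<cdot> b2" using le_loc[OF m, of g] gb by simp
  also have "b1 \<cdot> b2 = Sup {a \<cdot> b |a b. a \<in> P1 \<and> b \<in> P2}"
    using Sup_pr_below[of b1] Sup_pr_below[of b2] Sup_mul_Sup P1_def P2_def by metis
  finally have gS: "g \<le> Sup {a \<cdot> b |a b. a \<in> P1 \<and> b \<in> P2}" .
  have "\<forall>t\<in>{a \<cdot> b |a b. a \<in> P1 \<and> b \<in> P2}. pr t" using P1_def P2_def pr_mul by auto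
  then obtain t where t: "t \<in> {a \<cdot> b |a b. a \<in> P1 \<and> b \<in> P2}" "t \<noteq> bot" "lle m g t"
    using FC[OF m pr_cp[OF g(1)] g(2) _ gS] by blast
  then obtain p1 p2 where p: "p1 \<in> P1" "p2 \<in> P2" "t = p1 \<cdot> p2" by blast
  have p20: "p2 \<noteq> bot" using t(2) p(3) by auto
  have pp2: "pr p2" using p(2) P2_def by auto
  have "b1 \<le> lc m p1"
  proof -
    have "Sup P1 \<le> lc m p1"
    proof (rule Sup_least)
      fix p' assume p': "p' \<in> P1"
      have "p' \<cdot> p2 \<le> b1 \<cdot> b2" using p' p(2) P1_def P2_def by (auto intro: mono2)
      hence "lle m (p' \<cdot> p2) g" using pr_le_loc[OF m] pr_mul p' pp2 P1_def gb by (metis mem_Collect_eq)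
      hence "lle m (p' \<cdot> p2) (p1 \<cdot> p2)" using lle_trans[OF m _ t(3)] p(3) by blast
      hence "lle m p' p1" using lle_cancel[OF pp2 p20] by blast
      thus "p' \<le> lc m p1" using pr_le_loc[OF m] p' P1_def by blast
    qed
    thus ?thesis using Sup_pr_below[of b1] P1_def by simp
  qed
  thus ?thesis using p(1) P1_def by blast
qed

lemma pw1: "pw q (Suc 0) = q" by simp
lemma pw_Suc': "pw q (Suc n) = pw q n \<cdot> q" by (simp add: comm)

lemma lle_ne_bot: "maximal_el m \<Longrightarrow> lle m a b \<Longrightarrow> a \<noteq> bot \<Longrightarrow> b \<noteq> bot"
  using lle_bot by blast

lemma ARCH: "maximal_el m \<Longrightarrow> pr q \<Longrightarrow> q \<noteq> bot \<Longrightarrow> q \<le> m \<Longrightarrow> pr g \<Longrightarrow> g \<noteq> bot \<Longrightarrow>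
  \<exists>n. \<not> lle m g (pw q n)"
proof (rule ccontr)
  assume m: "maximal_el m" and q: "pr q" "q \<noteq> bot" "q \<le> m" and g: "pr g" "g \<noteq> bot"
    and H0: "\<not> (\<exists>n. \<not> lle m g (pw q n))"
  hence H: "\<And>n. lle m g (pw q n)" by blast
  have qnu: "\<not> lle m top q" using lle_top_unit q(3) by blast
  define Aset where "Aset = {r. pr r \<and> (\<forall>n. lle m r (pw q n))}"
  define Cset where "Cset = {x. pr x \<and> (\<exists>n. lle m (x \<cdot> pw q n) g)}"
  have "Sup Aset \<cdot> Sup Cset \<le> lc m g"
    unfolding Sup_mul_Sup
  proof (rule Sup_least, clarify)
    fix r x assume r: "r \<in> Aset" and x: "x \<in> Cset"
    obtain n where n: "lle m (x \<cdot> pw q n) g" using x Cset_def by blast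
    have "lle m (r \<cdot> x) (pw q n \<cdot> x)" using r Aset_def lle_mul by blast
    hence "lle m (r \<cdot> x) g" using lle_trans[OF m _ n] by (simp add: comm)
    thus "r \<cdot> x \<le> lc m g" using pr_le_loc[OF m] pr_mul r x Aset_def Cset_def by blast
  qed
  then obtain b1 b2 where b: "Sup Aset \<le> b1" "Sup Cset \<le> b2" "lc m g = b1 \<cdot> b2" using shp by blast
  obtain \<beta>1 where \<beta>1: "pr \<beta>1" "\<beta>1 \<le> b1" "b1 \<le> lc m \<beta>1" using FL[OF m g b(3)] by blast
  obtain \<beta>2 where \<beta>2: "pr \<beta>2" "\<beta>2 \<le> b2" "b2 \<le> lc m \<beta>2" using FL[OF m g, of b2 b1] b(3) by (metis comm)
  have "g \<le> b1 \<cdot> b2" using le_loc[OF m, of g] b(3) by simp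
  also have "\<dots> \<le> lc m \<beta>1 \<cdot> lc m \<beta>2" using \<beta>1(3) \<beta>2(3) by (rule mono2)
  also have "\<dots> \<le> lc m (\<beta>1 \<cdot> \<beta>2)" by (rule loc_mul_le[OF m])
  finally have g12: "lle m g (\<beta>1 \<cdot> \<beta>2)" using pr_le_loc[OF m g(1)] by blast
  have b120: "\<beta>1 \<cdot> \<beta>2 \<noteq> bot" using lle_ne_bot[OF m g12 g(2)] .
  hence b10: "\<beta>1 \<noteq> bot" by auto
  have "\<beta>1 \<cdot> \<beta>2 \<le> b1 \<cdot> b2" using \<beta>1(2) \<beta>2(2) by (rule mono2)
  hence g21: "lle m (\<beta>1 \<cdot> \<beta>2) g" using pr_le_loc[OF m pr_mul[OF \<beta>1(1) \<beta>2(1)]] b(3) by metis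
  show False
  proof (cases "\<forall>n. lle m \<beta>1 (pw q n)")
    case True
    hence "lle m \<beta>1 q" using pw1[of q] by metis
    then obtain r where r: "pr r" "lle m \<beta>1 (r \<cdot> q)" "r \<cdot> q \<le> \<beta>1" using division[OF m \<beta>1(1) q(1) q(2)] by blast
    have r0: "r \<noteq> bot" using lle_ne_bot[OF m r(2) b10] by auto
    have "\<forall>n. lle m r (pw q n)"
    proof
      fix n
      have "lle m (r \<cdot> q) (pw q n \<cdot> q)" using lle_trans[OF m lle_le[OF m r(3)]] True pw_Suc' by metis
      thus "lle m r (pw q n)" using lle_cancel[OF q(1) q(2)] by blast
    qed
    hence "r \<in> Aset" using r(1) Aset_def by blast
    hence "r \<le> lc m \<beta>1" using \<beta>1(3) b(1) Sup_upper[of r Aset] by (meson order_trans)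
    hence "lle m r \<beta>1" using pr_le_loc[OF m r(1)] by blast
    hence "lle m (top \<cdot> r) (q \<cdot> r)" using lle_trans[OF m _ r(2)] by (simp add: comm)
    hence "lle m top q" using lle_cancel[OF r(1) r0] by blast
    thus False using qnu by blast
  next
    case False
    then obtain n where n: "\<not> lle m \<beta>1 (pw q n)" by blast
    hence qb1: "lle m (pw q n) \<beta>1" using chain[OF m \<beta>1(1) pr_pw[OF q(1)]] by blast
    obtain x where x: "pr x" "lle m g (x \<cdot> pw q (Suc n))" "x \<cdot> pw q (Suc n) \<le> g"
      using division[OF m g(1) pr_pw[OF q(1)] pw_ne_bot[OF q(2)] H] by blast
    have "x \<in> Cset" using x(1) lle_le[OF m x(3)] Cset_def by blast
    hence "x \<le> lc m \<beta>2" using \<beta>2(3) b(2) Sup_upper[of x Cset] by (meson order_trans)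
    hence x2: "lle m x \<beta>2" using pr_le_loc[OF m x(1)] by blast
    have "lle m (pw q n \<cdot> x) (\<beta>1 \<cdot> \<beta>2)" using lle_mul2[OF m qb1 x2] .
    hence "lle m (pw q n \<cdot> x) (x \<cdot> pw q (Suc n))" using lle_trans[OF m _ lle_trans[OF m g21 x(2)]] by blast
    hence "lle m (top \<cdot> (pw q n \<cdot> x)) (q \<cdot> (pw q n \<cdot> x))" by (simp add: ac)
    moreover have "pr (pw q n \<cdot> x)" using pr_mul pr_pw q(1) x(1) by blast
    moreover have "pw q n \<cdot> x \<noteq> bot"
    proof -
      have "x \<cdot> pw q (Suc n) \<noteq> bot" using lle_ne_bot[OF m x(2) g(2)] .
      hence "x \<noteq> bot" by auto
      thus ?thesis using mul_ne_bot pw_ne_bot q(2) by blast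
    qed
    ultimately have "lle m top q" using lle_cancel by blast
    thus False using qnu by blast
  qed
qed

lemma pw_le_prime: "prime_el mul p \<Longrightarrow> pw q n \<le> p \<Longrightarrow> q \<le> p"
proof (induction n)
  case 0 thus ?case unfolding prime_el_def by (simp add: top_unique)
next
  case (Suc n) thus ?case unfolding prime_el_def by auto
qed

lemma one_dim: "prime_el mul (p::'a) \<Longrightarrow> p \<noteq> bot \<Longrightarrow> maximal_el p"
proof -
  assume p: "prime_el mul p" and p0: "p \<noteq> bot"
  have pt: "p \<noteq> top" using p prime_el_def by auto
  obtain m where m: "maximal_el m" "p \<le> m" using ex_max[OF pt] by blast
  show ?thesis
  proof (cases "m = p")
    case True thus ?thesis using m by simp
  next
    case False
    hence "\<not> m \<le> p" using m(2) by auto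
    then obtain q where q: "pr q" "q \<le> m" "\<not> q \<le> p"
      using Sup_pr_below[of m] by (metis (no_types, lifting) Sup_least mem_Collect_eq)
    have q0: "q \<noteq> bot" using q(3) by auto
    have "\<exists>g. pr g \<and> g \<le> p \<and> g \<noteq> bot"
    proof (rule ccontr)
      assume "\<not> (\<exists>g. pr g \<and> g \<le> p \<and> g \<noteq> bot)"
      hence "Sup {c. pr c \<and> c \<le> p} \<le> bot" by (intro Sup_least) auto
      hence "p \<le> bot" using Sup_pr_below[of p] by simp
      thus False using p0 by (simp add: bot_unique)
    qed
    then obtain g where g: "pr g" "g \<le> p" "g \<noteq> bot" by blast
    obtain n where "\<not> lle m g (pw q n)" using ARCH[OF m(1) q(1) q0 q(2) g(1) g(3)] by blast
    hence "lle m (pw q n) g" using chain[OF m(1) g(1) pr_pw[OF q(1)]] by blast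
    then obtain s where s: "\<not> s \<le> m" "s \<cdot> pw q n \<le> g" unfolding lle_def by blast
    have "s \<cdot> pw q n \<le> p" using s(2) g(2) by simp
    moreover have "\<not> s \<le> p" using s(1) m(2) by auto
    ultimately have "pw q n \<le> p" using p unfolding prime_el_def by blast
    hence "q \<le> p" using pw_le_prime[OF p] by blast
    thus ?thesis using q(3) by blast
  qed
qed

lemma Pruefer: "Pruefer_1dim mul"
  unfolding Pruefer_1dim_def using cp_pr one_dim by blast

end



locale VL = SL +
  fixes m t :: 'a
  assumes mx: "maximal_el m" and pt: "pr t" and t0: "t \<noteq> bot" and tm: "t \<le> m"
begin

abbreviation ll (infix "\<preceq>" 50) where "a \<preceq> b \<equiv> lle m a b"

definition Sv :: "'a \<Rightarrow> real set" where
  "Sv p = {real a / real b | a b. 0 < b \<and> pw p b \<preceq> pw t a}"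
definition val :: "'a \<Rightarrow> real" where "val p = Sup (Sv p)"

abbreviation "P0 p \<equiv> pr p \<and> p \<noteq> bot"

lemma ltrans: "a \<preceq> b \<Longrightarrow> b \<preceq> c \<Longrightarrow> a \<preceq> c" using lle_trans[OF mx] by blast
lemma lrefl: "a \<preceq> a" using lle_refl[OF mx] by blast
lemma lle: "a \<le> b \<Longrightarrow> a \<preceq> b" using lle_le[OF mx] by blast
lemma lmul2: "a \<preceq> b \<Longrightarrow> c \<preceq> d \<Longrightarrow> a \<cdot> c \<preceq> b \<cdot> d" using lle_mul2[OF mx] by blast
lemma lchain: "pr x \<Longrightarrow> pr y \<Longrightarrow> x \<preceq> y \<or> y \<preceq> x" using chain[OF mx] by blast

lemma pw_le_m: "0 < k \<Longrightarrow> pw t k \<le> m"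
  by (cases k) (auto intro: order_trans[OF mul_le_l tm])

lemma not_unit_le_m: "a \<le> m \<Longrightarrow> \<not> top \<preceq> a" using lle_top_unit by blast

lemma lpw: "a \<preceq> b \<Longrightarrow> pw a n \<preceq> pw b n"
  by (induction n) (auto intro: lrefl lmul2)

lemma tpow: "pw t i \<preceq> pw t j \<longleftrightarrow> j \<le> i"
proof
  assume h: "pw t i \<preceq> pw t j"
  show "j \<le> i"
  proof (rule ccontr)
    assume "\<not> j \<le> i"
    hence j: "j = i + (j - i)" "0 < j - i" by auto
    hence "top \<cdot> pw t i \<preceq> pw t (j - i) \<cdot> pw t i" using h pw_add[of t i "j - i"] by (simp add: comm)
    hence "top \<preceq> pw t (j - i)" using lle_cancel[OF pr_pw[OF pt] pw_ne_bot[OF t0]] by blast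
    thus False using not_unit_le_m pw_le_m j(2) by blast
  qed
next
  assume "j \<le> i"
  then obtain k where "i = j + k" using le_Suc_ex by blast
  hence "pw t i \<le> pw t j" using pw_add[of t j k] mul_le_l by simp
  thus "pw t i \<preceq> pw t j" by (rule lle)
qed

lemma Sv_ne: "0 \<in> Sv p"
proof -
  have "pw p 1 \<preceq> pw t 0" by (rule lle) simp
  thus ?thesis unfolding Sv_def by (intro CollectI exI[of _ 0] exI[of _ 1]) simp
qed

lemma Sv_bdd: "P0 p \<Longrightarrow> \<exists>N::nat. \<forall>x\<in>Sv p. x \<le> N"
proof -
  assume p: "P0 p"
  obtain N where "\<not> p \<preceq> pw t N" using ARCH[OF mx pt t0 tm] p by blast
  hence N: "pw t N \<preceq> p" using lchain[OF pr_pw[OF pt]] p by blast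
  have "\<forall>x\<in>Sv p. x \<le> N"
  proof
    fix x assume "x \<in> Sv p"
    then obtain a b where ab: "x = real a / real b" "0 < b" "pw p b \<preceq> pw t a" unfolding Sv_def by blast
    have "pw t (N * b) \<preceq> pw p b" using lpw[OF N, of b] pw_pw by metis
    hence "pw t (N * b) \<preceq> pw t a" using ab(3) ltrans by blast
    hence "a \<le> N * b" using tpow by blast
    hence "real a \<le> real N * real b" by (metis of_nat_le_iff of_nat_mult)
    thus "x \<le> N" using ab(1,2) by (simp add: divide_le_eq)
  qed
  thus ?thesis by blast
qed

lemma Sv_bdd': "P0 p \<Longrightarrow> bdd_above (Sv p)"
  using Sv_bdd unfolding bdd_above_def by blast

lemma val_ge: "P0 p \<Longrightarrow> 0 < b \<Longrightarrow> pw p b \<preceq> pw t a \<Longrightarrow> real a / real b \<le> val p"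
proof -
  assume p: "P0 p" and b: "0 < b" and h: "pw p b \<preceq> pw t a"
  have "real a / real b \<in> Sv p" unfolding Sv_def using b h by blast
  thus ?thesis unfolding val_def using cSup_upper Sv_bdd'[OF p] by blast
qed

lemma val_le: "(\<And>a b. 0 < b \<Longrightarrow> pw p b \<preceq> pw t a \<Longrightarrow> real a / real b \<le> c) \<Longrightarrow> val p \<le> c"
  unfolding val_def
proof (rule cSup_least)
  show "Sv p \<noteq> {}" using Sv_ne by blast
next
  fix x assume H: "\<And>a b. 0 < b \<Longrightarrow> pw p b \<preceq> pw t a \<Longrightarrow> real a / real b \<le> c" and x: "x \<in> Sv p"
  then obtain a b where "x = real a / real b" "0 < b" "pw p b \<preceq> pw t a" unfolding Sv_def by blast
  thus "x \<le> c" using H by blast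
qed

lemma val_nonneg: "P0 p \<Longrightarrow> 0 \<le> val p"
  unfolding val_def using Sv_ne Sv_bdd' by (meson cSup_upper)

lemma val_gt: "P0 p \<Longrightarrow> 0 < b \<Longrightarrow> val p < real a / real b \<Longrightarrow> pw t a \<preceq> pw p b"
proof -
  assume p: "P0 p" and b: "0 < b" and lt: "val p < real a / real b"
  have "\<not> pw p b \<preceq> pw t a"
  proof
    assume "pw p b \<preceq> pw t a"
    hence "real a / real b \<le> val p" using val_ge[OF p b] by blast
    thus False using lt by simp
  qed
  thus ?thesis using lchain[OF pr_pw[OF pt] pr_pw] p by blast
qed

lemma val_mono: "P0 p \<Longrightarrow> p \<preceq> q \<Longrightarrow> val q \<le> val p"
proof (rule val_le)
  fix a b :: nat assume p: "P0 p" and pq: "p \<preceq> q" and b: "0 < b" and h: "pw q b \<preceq> pw t a"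
  have "pw p b \<preceq> pw t a" using ltrans[OF lpw[OF pq] h] .
  thus "real a / real b \<le> val p" using val_ge p b by blast
qed

lemma P0_mul: "P0 p \<Longrightarrow> P0 q \<Longrightarrow> P0 (p \<cdot> q)" using pr_mul mul_ne_bot by blast
lemma P0_pw: "P0 p \<Longrightarrow> P0 (pw p n)" using pr_pw pw_ne_bot by blast

lemma val_add_ge: "P0 p \<Longrightarrow> P0 q \<Longrightarrow> val p + val q \<le> val (p \<cdot> q)"
proof -
  assume p: "P0 p" and q: "P0 q"
  have key: "x + y \<le> val (p \<cdot> q)" if x: "x \<in> Sv p" and y: "y \<in> Sv q" for x y
  proof -
    obtain a b where ab: "x = real a / real b" "0 < b" "pw p b \<preceq> pw t a" using x unfolding Sv_def by blast
    obtain c d where cd: "y = real c / real d" "0 < d" "pw q d \<preceq> pw t c" using y unfolding Sv_def by blast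
    have "pw p (b * d) \<preceq> pw t (a * d)" using lpw[OF ab(3), of d] pw_pw by metis
    moreover have "pw q (b * d) \<preceq> pw t (c * b)" using lpw[OF cd(3), of b] pw_pw by (metis mult.commute)
    ultimately have "pw (p \<cdot> q) (b * d) \<preceq> pw t (a * d + c * b)"
      using lmul2 by (simp add: pw_mul pw_add)
    moreover have "0 < b * d" using ab(2) cd(2) by simp
    ultimately have "real (a * d + c * b) / real (b * d) \<le> val (p \<cdot> q)"
      using val_ge[OF P0_mul[OF p q]] by blast
    moreover have "real (a * d + c * b) / real (b * d) = x + y"
      using ab(1,2) cd(1,2) by (simp add: field_simps)
    ultimately show ?thesis by simp
  qed
  have "val p \<le> val (p \<cdot> q) - val q"
    unfolding val_def[of p]
  proof (rule cSup_least[OF _ ])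
    show "Sv p \<noteq> {}" using Sv_ne by blast
    fix x assume x: "x \<in> Sv p"
    have "val q \<le> val (p \<cdot> q) - x"
      unfolding val_def[of q]
      by (rule cSup_least) (use Sv_ne key[OF x] in \<open>auto simp: algebra_simps\<close>)
    thus "x \<le> val (p \<cdot> q) - val q" by simp
  qed
  thus ?thesis by simp
qed

lemma real_lim_le: "(\<And>N::nat. 0 < N \<Longrightarrow> x \<le> y + c / real N) \<Longrightarrow> x \<le> (y::real)"
proof (rule ccontr)
  assume H: "\<And>N::nat. 0 < N \<Longrightarrow> x \<le> y + c / real N" and n: "\<not> x \<le> y"
  obtain N :: nat where N: "max 1 (c / (x - y)) < N" using reals_Archimedean2 by blast
  hence N0: "0 < N" by simp
  have "c / (x - y) < N" using N by simp
  hence "c < N * (x - y)" using n by (simp add: divide_less_eq mult.commute)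
  hence "c / N < x - y" using N0 by (simp add: divide_less_eq mult.commute)
  thus False using H[OF N0] by simp
qed

lemma val_add_le: "P0 p \<Longrightarrow> P0 q \<Longrightarrow> val (p \<cdot> q) \<le> val p + val q"
proof (rule val_le)
  fix a b :: nat assume p: "P0 p" and q: "P0 q" and b: "0 < b" and h: "pw (p \<cdot> q) b \<preceq> pw t a"
  show "real a / real b \<le> val p + val q"
  proof (rule real_lim_le[where c = "2 / real b"])
    fix N :: nat assume N: "0 < N"
    define n where "n = b * N"
    have n0: "0 < n" using b N n_def by simp
    define k where "k = nat (floor (real n * val p)) + 1"
    define l where "l = nat (floor (real n * val q)) + 1"
    have vp0: "0 \<le> val p" "0 \<le> val q" using val_nonneg p q by auto
    have kk: "real k \<le> real n * val p + 1" "real n * val p < real k"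
      unfolding k_def using vp0 n0 by (auto simp: of_nat_nat) linarith+
    have ll: "real l \<le> real n * val q + 1" "real n * val q < real l"
      unfolding l_def using vp0 n0 by (auto simp: of_nat_nat) linarith+
    have "val p < real k / real n" using kk(2) n0 by (simp add: field_simps)
    hence tk: "pw t k \<preceq> pw p n" using val_gt p n0 by blast
    have "val q < real l / real n" using ll(2) n0 by (simp add: field_simps)
    hence tl: "pw t l \<preceq> pw q n" using val_gt q n0 by blast
    have "pw t (k + l) \<preceq> pw (p \<cdot> q) n" using lmul2[OF tk tl] by (simp add: pw_add pw_mul)
    moreover have "pw (p \<cdot> q) n \<preceq> pw t (a * N)" using lpw[OF h, of N] pw_pw n_def by metis
    ultimately have "pw t (k + l) \<preceq> pw t (a * N)" by (rule ltrans)
    hence "a * N \<le> k + l" using tpow by blast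
    hence "real a * real N \<le> real k + real l" by (metis of_nat_add of_nat_le_iff of_nat_mult)
    also have "\<dots> \<le> real n * (val p + val q) + 2" using kk ll by (simp add: algebra_simps)
    finally have "real a * real N \<le> real b * real N * (val p + val q) + 2" using n_def by simp
    hence "real a * real N / (real b * real N) \<le> (real b * real N * (val p + val q) + 2) / (real b * real N)"
      using b N by (intro divide_right_mono) auto
    thus "real a / real b \<le> val p + val q + 2 / real b / real N" using b N by (simp add: field_simps)
  qed
qed

lemma val_add: "P0 p \<Longrightarrow> P0 q \<Longrightarrow> val (p \<cdot> q) = val p + val q"
  using val_add_le val_add_ge by (simp add: antisym)

lemma val_eq: "P0 p \<Longrightarrow> P0 q \<Longrightarrow> p \<preceq> q \<Longrightarrow> q \<preceq> p \<Longrightarrow> val p = val q"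
  using val_mono by (simp add: antisym)

lemma pw_top: "pw top n = top" by (induction n) simp_all

lemma val_top: "val top = 0"
proof (rule antisym)
  show "val top \<le> 0"
  proof (rule val_le)
    fix a b :: nat assume "0 < b" "pw top b \<preceq> pw t a"
    hence "pw t 0 \<preceq> pw t a" using pw_top by simp
    hence "a = 0" using tpow[of 0 a] by simp
    thus "real a / real b \<le> 0" by simp
  qed
  show "0 \<le> val top" using val_nonneg pr_top bot_ne_top by metis
qed

lemma val_t: "val t = 1"
proof (rule antisym)
  show "val t \<le> 1"
  proof (rule val_le)
    fix a b :: nat assume b: "0 < b" and h: "pw t b \<preceq> pw t a"
    hence "a \<le> b" using tpow by blast
    thus "real a / real b \<le> 1" using b by simp
  qed
  have "pw t 1 \<preceq> pw t 1" by (rule lrefl)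
  thus "1 \<le> val t" using val_ge[of t 1 1] pt t0 by simp
qed

lemma val_pw: "P0 p \<Longrightarrow> val (pw p n) = real n * val p"
proof (induction n)
  case 0 thus ?case using val_top by simp
next
  case (Suc n) thus ?case using val_add[OF Suc.prems P0_pw[OF Suc.prems]] by (simp add: algebra_simps)
qed

lemma val_pos: "P0 r \<Longrightarrow> r \<le> m \<Longrightarrow> 0 < val r"
proof -
  assume r: "P0 r" and rm: "r \<le> m"
  obtain n where n: "\<not> t \<preceq> pw r n" using ARCH[OF mx _ _ rm pt t0] r by blast
  hence n0: "0 < n" using lle[of t top] by (cases n) auto
  have "pw r n \<preceq> pw t 1" using lchain[OF pt pr_pw] r n by auto
  hence "real 1 / real n \<le> val r" using val_ge r n0 by blast
  moreover have "0 < real 1 / real n" using n0 by simp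
  ultimately show ?thesis by linarith
qed

lemma val_strict: "P0 p \<Longrightarrow> P0 q \<Longrightarrow> p \<preceq> q \<Longrightarrow> \<not> q \<preceq> p \<Longrightarrow> val q < val p"
proof -
  assume p: "P0 p" and q: "P0 q" and pq: "p \<preceq> q" and qp: "\<not> q \<preceq> p"
  obtain r where r: "pr r" "p \<preceq> r \<cdot> q" "r \<cdot> q \<le> p" using division[OF mx _ _ _ pq] p q by blast
  have r0: "r \<noteq> bot" using lle_ne_bot[OF mx r(2)] p by auto
  have rm: "r \<le> m"
  proof (rule ccontr)
    assume "\<not> r \<le> m"
    hence "q \<preceq> r \<cdot> q" unfolding lle_def using pr_cp[OF r(1)] by blast
    hence "q \<preceq> p" using ltrans lle[OF r(3)] by blast
    thus False using qp by blast
  qed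
  have "val p = val (r \<cdot> q)" using val_eq[OF p P0_mul[OF _ q] r(2) lle[OF r(3)]] r r0 by blast
  also have "\<dots> = val r + val q" using val_add r r0 q by blast
  finally show ?thesis using val_pos[of r] r r0 rm by simp
qed

lemma val_iff: "P0 p \<Longrightarrow> P0 q \<Longrightarrow> p \<preceq> q \<longleftrightarrow> val q \<le> val p"
proof
  assume "P0 p" "P0 q" "p \<preceq> q" thus "val q \<le> val p" using val_mono by blast
next
  assume p: "P0 p" and q: "P0 q" and v: "val q \<le> val p"
  show "p \<preceq> q"
  proof (rule ccontr)
    assume "\<not> p \<preceq> q"
    hence "q \<preceq> p" using lchain p q by blast
    hence "val p < val q" using val_strict[OF q p] \<open>\<not> p \<preceq> q\<close> by blast
    thus False using v by simp
  qed
qed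

end


context VL begin

abbreviation "C \<equiv> loc_carrier mul m"
definition Dset where "Dset x = {p. P0 p \<and> p \<le> x}"
definition Vset where "Vset x = val ` Dset x"
definition W where "W = val ` {p. P0 p}"

lemma lc_le_iff: "pr p \<Longrightarrow> p \<le> lc m y \<longleftrightarrow> p \<preceq> y" using pr_le_loc[OF mx] by blast

lemma C_lc: "x \<in> C \<Longrightarrow> lc m x = x" using carrier_loc[OF mx] by blast
lemma lc_C: "lc m x \<in> C" unfolding loc_carrier_def by blast

lemma C_le: "y \<in> C \<Longrightarrow> pr p \<Longrightarrow> p \<preceq> y \<Longrightarrow> p \<le> y"
  using lc_le_iff[of p y] C_lc[of y] by simp

lemma W_nonneg: "w \<in> W \<Longrightarrow> 0 \<le> w" unfolding W_def using val_nonneg by auto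
lemma Vset_W: "Vset x \<subseteq> W" unfolding Vset_def Dset_def W_def by auto

lemma I1: "x \<in> C \<Longrightarrow> y \<in> C \<Longrightarrow> x \<le> y \<longleftrightarrow> Vset x \<subseteq> Vset y"
proof
  assume "x \<le> y" thus "Vset x \<subseteq> Vset y" unfolding Vset_def Dset_def by auto
next
  assume x: "x \<in> C" and y: "y \<in> C" and V: "Vset x \<subseteq> Vset y"
  have "Sup {p. pr p \<and> p \<le> x} \<le> y"
  proof (rule Sup_least, clarify)
    fix p assume p: "pr p" "p \<le> x"
    show "p \<le> y"
    proof (cases "p = bot")
      case False
      hence "val p \<in> Vset y" using V p unfolding Vset_def Dset_def by auto
      then obtain q where q: "P0 q" "q \<le> y" "val q = val p" unfolding Vset_def Dset_def by auto
      hence "p \<preceq> q" using val_iff p False by simp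
      hence "p \<preceq> y" using ltrans lle[OF q(2)] by blast
      thus "p \<le> y" using C_le[OF y p(1)] by blast
    qed simp
  qed
  thus "x \<le> y" using Sup_pr_below[of x] by simp
qed

lemma I2: "x \<in> C \<Longrightarrow> r \<in> Vset x \<Longrightarrow> P0 p \<Longrightarrow> r \<le> val p \<Longrightarrow> val p \<in> Vset x"
proof -
  assume x: "x \<in> C" and r: "r \<in> Vset x" and p: "P0 p" and rp: "r \<le> val p"
  obtain q where q: "P0 q" "q \<le> x" "val q = r" using r unfolding Vset_def Dset_def by auto
  have "p \<preceq> q" using val_iff p q rp by simp
  hence "p \<preceq> x" using ltrans lle[OF q(2)] by blast
  hence "p \<le> x" using C_le[OF x] p by blast
  thus ?thesis using p unfolding Vset_def Dset_def by auto
qed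

lemma local_max: "P0 p \<Longrightarrow> p \<preceq> Sup S \<Longrightarrow> \<forall>u\<in>S. pr u \<Longrightarrow> \<exists>q\<in>S. P0 q \<and> p \<preceq> q"
proof -
  assume p: "P0 p" and pS: "p \<preceq> Sup S" and S: "\<forall>u\<in>S. pr u"
  obtain s where s: "cp s" "\<not> s \<le> m" "s \<cdot> p \<le> Sup S" using pS lle_def by blast
  have sp0: "s \<cdot> p \<noteq> bot" using mul_ne_bot s_ne_bot[OF mx s(2)] p by blast
  obtain q where q: "q \<in> S" "q \<noteq> bot" "s \<cdot> p \<preceq> q"
    using FC[OF mx cp_mul[OF s(1) pr_cp] sp0 S s(3)] p by blast
  have "p \<preceq> s \<cdot> p" unfolding lle_def using s by blast
  hence "p \<preceq> q" using ltrans q(3) by blast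
  thus ?thesis using q S by blast
qed

lemma I3: "x \<in> C \<Longrightarrow> y \<in> C \<Longrightarrow> Vset (lc m (x \<cdot> y)) = {a + b |a b. a \<in> Vset x \<and> b \<in> Vset y}"
proof (rule set_eqI, rule iffI)
  fix v assume x: "x \<in> C" and y: "y \<in> C" and v: "v \<in> Vset (lc m (x \<cdot> y))"
  then obtain p where p: "P0 p" "p \<le> lc m (x \<cdot> y)" "v = val p" unfolding Vset_def Dset_def by auto
  have pxy: "p \<preceq> x \<cdot> y" using lc_le_iff p by blast
  define S where "S = {a \<cdot> b |a b. a \<in> {c. pr c \<and> c \<le> x} \<and> b \<in> {c. pr c \<and> c \<le> y}}"
  have "x \<cdot> y = Sup S" unfolding S_def using Sup_mul_Sup Sup_pr_below by metis
  moreover have "\<forall>u\<in>S. pr u" unfolding S_def using pr_mul by auto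
  ultimately obtain q where q: "q \<in> S" "P0 q" "p \<preceq> q" using local_max[OF p(1)] pxy by metis
  then obtain p1 p2 where pp: "pr p1" "p1 \<le> x" "pr p2" "p2 \<le> y" "q = p1 \<cdot> p2" unfolding S_def by blast
  have p10: "p1 \<noteq> bot" "p2 \<noteq> bot" using q(2) pp(5) by auto
  have "p \<preceq> p1" using ltrans[OF q(3)] lle[of q p1] pp(5) mul_le_l by metis
  then obtain r where r: "pr r" "p \<preceq> r \<cdot> p1" "r \<cdot> p1 \<le> p" using division[OF mx _ pp(1) p10(1)] p by blast
  have "r \<cdot> p1 \<preceq> p2 \<cdot> p1" using ltrans[OF lle[OF r(3)] ltrans[OF q(3)]] pp(5) by (simp add: comm lrefl)
  hence "r \<preceq> p2" using lle_cancel[OF pp(1) p10(1)] by blast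
  hence "r \<preceq> y" using ltrans lle[OF pp(4)] by blast
  hence ry: "r \<le> y" using C_le[OF y r(1)] by blast
  have r0: "r \<noteq> bot" using lle_ne_bot[OF mx r(2)] p by auto
  have "val p = val (r \<cdot> p1)" using val_eq[OF p(1) _ r(2) lle[OF r(3)]] r(1) r0 pp(1) p10(1) P0_mul by blast
  also have "\<dots> = val r + val p1" using val_add r(1) r0 pp(1) p10(1) by blast
  finally have "v = val r + val p1" using p(3) by simp
  moreover have "val r \<in> Vset y" "val p1 \<in> Vset x" using r(1) r0 ry pp p10 unfolding Vset_def Dset_def by auto
  ultimately show "v \<in> {a + b |a b. a \<in> Vset x \<and> b \<in> Vset y}" by (auto simp: add.commute)
next
  fix v assume x: "x \<in> C" and y: "y \<in> C" and v: "v \<in> {a + b |a b. a \<in> Vset x \<and> b \<in> Vset y}"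
  then obtain p1 p2 where pp: "P0 p1" "p1 \<le> x" "P0 p2" "p2 \<le> y" "v = val p1 + val p2"
    unfolding Vset_def Dset_def by auto
  have "p1 \<cdot> p2 \<le> lc m (x \<cdot> y)" using mono2[OF pp(2) pp(4)] le_loc[OF mx] order_trans by blast
  moreover have "val (p1 \<cdot> p2) = v" using val_add pp by simp
  moreover have "P0 (p1 \<cdot> p2)" using P0_mul pp by blast
  ultimately have "p1 \<cdot> p2 \<in> Dset (lc m (x \<cdot> y))" "val (p1 \<cdot> p2) = v" unfolding Dset_def by auto
  thus "v \<in> Vset (lc m (x \<cdot> y))" unfolding Vset_def by (metis image_eqI)
qed

lemma I4: "U \<subseteq> W \<Longrightarrow> (\<forall>u\<in>U. \<forall>w\<in>W. u \<le> w \<longrightarrow> w \<in> U) \<Longrightarrow> \<exists>x\<in>C. Vset x = U"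
proof -
  assume UW: "U \<subseteq> W" and up: "\<forall>u\<in>U. \<forall>w\<in>W. u \<le> w \<longrightarrow> w \<in> U"
  define S where "S = {p. P0 p \<and> val p \<in> U}"
  define x where "x = lc m (Sup S)"
  have "Vset x = U"
  proof (rule set_eqI, rule iffI)
    fix v assume "v \<in> Vset x"
    then obtain p where p: "P0 p" "p \<le> x" "v = val p" unfolding Vset_def Dset_def by auto
    have "p \<preceq> Sup S" using lc_le_iff p x_def by blast
    then obtain q where q: "q \<in> S" "p \<preceq> q" using local_max[OF p(1)] S_def by blast
    have "val q \<le> val p" using val_mono p q(2) by blast
    moreover have "val p \<in> W" using p W_def by auto
    ultimately show "v \<in> U" using up q(1) S_def p(3) by blast
  next
    fix v assume v: "v \<in> U"
    then obtain p where p: "P0 p" "val p = v" using UW W_def by auto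
    hence "p \<in> S" using v S_def by auto
    hence "p \<le> x" unfolding x_def using le_loc[OF mx, of "Sup S"] Sup_upper order_trans by blast
    thus "v \<in> Vset x" using p unfolding Vset_def Dset_def by auto
  qed
  thus ?thesis using lc_C x_def by blast
qed

lemma Vset_bot: "Vset bot = {}" unfolding Vset_def Dset_def by (auto simp: bot_unique)

end


context VL begin

lemma unit_val: "P0 r \<Longrightarrow> \<not> r \<le> m \<Longrightarrow> val r = 0"
proof -
  assume r: "P0 r" and rm: "\<not> r \<le> m"
  have "top \<preceq> r" unfolding lle_def using pr_cp r rm by (intro exI[of _ r]) simp
  hence "val r \<le> val top" using val_mono pr_top bot_ne_top by metis
  thus ?thesis using val_top val_nonneg[OF r] by simp
qed

lemma W_Z: "m \<le> lc m t \<Longrightarrow> W = range real"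
proof
  assume gen: "m \<le> lc m t"
  show "W \<subseteq> range real"
  proof
    fix w assume "w \<in> W"
    then obtain p where p: "P0 p" "w = val p" unfolding W_def by auto
    obtain n where n: "\<not> p \<preceq> pw t n" using ARCH[OF mx pt t0 tm] p by blast
    define n0 where "n0 = (LEAST n. \<not> p \<preceq> pw t n)"
    have n0: "\<not> p \<preceq> pw t n0" using LeastI[of "\<lambda>n. \<not> p \<preceq> pw t n", OF n] n0_def by blast
    have "n0 \<noteq> 0"
    proof
      assume "n0 = 0" thus False using n0 lle[of p top] by simp
    qed
    then obtain k where k: "n0 = Suc k" using not0_implies_Suc by blast
    have pk: "p \<preceq> pw t k" using not_less_Least[of k "\<lambda>n. \<not> p \<preceq> pw t n"] k n0_def by auto
    obtain r where r: "pr r" "p \<preceq> r \<cdot> pw t k" "r \<cdot> pw t k \<le> p"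
      using division[OF mx _ pr_pw[OF pt] pw_ne_bot[OF t0] pk] p by blast
    have r0: "r \<noteq> bot" using lle_ne_bot[OF mx r(2)] p by auto
    have rm: "\<not> r \<le> m"
    proof
      assume "r \<le> m"
      hence "r \<preceq> t" using lc_le_iff[OF r(1)] gen by (meson order_trans)
      hence "r \<cdot> pw t k \<preceq> t \<cdot> pw t k" using lle_mul by blast
      hence "p \<preceq> pw t n0" using ltrans[OF r(2)] k by simp
      thus False using n0 by blast
    qed
    have "val p = val (r \<cdot> pw t k)" using val_eq[OF p(1) P0_mul[OF _ P0_pw] r(2) lle[OF r(3)]] r(1) r0 pt t0 by blast
    also have "\<dots> = val r + val (pw t k)" using val_add r(1) r0 P0_pw pt t0 by blast
    also have "\<dots> = real k" using unit_val[OF _ rm] r(1) r0 val_pw[of t k] val_t pt t0 by simp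
    finally show "w \<in> range real" using p by simp
  qed
next
  show "range real \<subseteq> W"
  proof
    fix w assume "w \<in> range real"
    then obtain n where "w = real n" by blast
    hence "w = val (pw t n)" using val_pw[of t n] val_t pt t0 by simp
    thus "w \<in> W" unfolding W_def using P0_pw pt t0 by blast
  qed
qed

lemma halve: "\<not> (\<exists>t'. P0 t' \<and> t' \<le> m \<and> m \<le> lc m t') \<Longrightarrow> P0 p \<Longrightarrow> p \<le> m \<Longrightarrow>
   \<exists>q. P0 q \<and> q \<le> m \<and> 0 < val q \<and> 2 * val q \<le> val p"
proof -
  assume R: "\<not> (\<exists>t'. P0 t' \<and> t' \<le> m \<and> m \<le> lc m t')" and p: "P0 p" and pm: "p \<le> m"
  have "\<not> m \<le> lc m p" using R p pm by blast
  then obtain q where q: "pr q" "q \<le> m" "\<not> q \<le> lc m p"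
    using Sup_pr_below[of m] by (metis (no_types, lifting) Sup_least mem_Collect_eq)
  have q0: "q \<noteq> bot" using q(3) by auto
  have nqp: "\<not> q \<preceq> p" using q(3) lc_le_iff[OF q(1)] by blast
  hence pq: "p \<preceq> q" using lchain q(1) p by blast
  obtain r where r: "pr r" "p \<preceq> r \<cdot> q" "r \<cdot> q \<le> p" using division[OF mx _ q(1) q0 pq] p by blast
  have r0: "r \<noteq> bot" using lle_ne_bot[OF mx r(2)] p by auto
  have vp: "val p = val r + val q"
    using val_eq[OF p(1) P0_mul[OF _ _] r(2) lle[OF r(3)]] val_add r(1) r0 q(1) q0 by metis
  have vq: "0 < val q" using val_pos q q0 by blast
  have vqp: "val q < val p" using val_strict p q q0 pq nqp by blast
  hence vr: "0 < val r" using vp by simp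
  have rm: "r \<le> m" using unit_val r r0 vr by fastforce
  show ?thesis
  proof (cases "val q \<le> val r")
    case True thus ?thesis using q q0 vq vp by (intro exI[of _ q]) auto
  next
    case False thus ?thesis using r r0 rm vr vp by (intro exI[of _ r]) auto
  qed
qed

lemma small: "\<not> (\<exists>t'. P0 t' \<and> t' \<le> m \<and> m \<le> lc m t') \<Longrightarrow> \<exists>q. P0 q \<and> q \<le> m \<and> 0 < val q \<and> val q \<le> 1 / 2 ^ k"
proof (induction k)
  case 0 thus ?case using pt t0 tm val_t by (intro exI[of _ t]) simp
next
  case (Suc k)
  then obtain q where q: "P0 q" "q \<le> m" "0 < val q" "val q \<le> 1 / 2 ^ k" by blast
  obtain q' where q': "P0 q'" "q' \<le> m" "0 < val q'" "2 * val q' \<le> val q" using halve[OF Suc.prems q(1) q(2)] by blast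
  have h: "2 * val q' * 2 ^ k \<le> val q * 2 ^ k" using q'(4) by (intro mult_right_mono) auto
  have hq: "val q * 2 ^ k \<le> 1" using q(4) by (simp add: field_simps)
  have e: "val q' * 2 ^ (Suc k) = 2 * val q' * 2 ^ k" by simp
  hence "val q' * 2 ^ (Suc k) \<le> 1" using h hq by linarith
  hence "val q' \<le> 1 / 2 ^ Suc k" by (simp add: field_simps)
  thus ?case using q' by blast
qed

lemma dense: "\<not> (\<exists>t'. P0 t' \<and> t' \<le> m \<and> m \<le> lc m t') \<Longrightarrow> 0 \<le> x \<Longrightarrow> 0 < e \<Longrightarrow>
  \<exists>p. P0 p \<and> x < val p \<and> val p < x + e"
proof -
  assume R: "\<not> (\<exists>t'. P0 t' \<and> t' \<le> m \<and> m \<le> lc m t')" and x: "0 \<le> x" and e: "0 < e"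
  obtain k :: nat where k: "1 / e < k" using reals_Archimedean2 by blast
  have kk: "real k < 2 ^ k" by (rule of_nat_less_two_power)
  hence "1 / e < 2 ^ k" using k by linarith
  hence ke: "1 / 2 ^ k < e" using e by (simp add: field_simps)
  obtain q where q: "P0 q" "q \<le> m" "0 < val q" "val q \<le> 1 / 2 ^ k" using small[OF R] by blast
  define d where "d = val q"
  have d: "0 < d" "d < e" using q ke d_def by auto
  define n where "n = nat (floor (x / d)) + 1"
  have n1: "x / d < real n" unfolding n_def using x d by linarith
  have n2: "real n \<le> x / d + 1" unfolding n_def using x d by (simp add: of_nat_nat)
  have "x < real n * d" using n1 d by (simp add: field_simps)
  moreover have "real n * d \<le> x + d" using n2 d by (simp add: field_simps)
  moreover have "val (pw q n) = real n * d" using val_pw q d_def by simp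
  ultimately show ?thesis using P0_pw[OF q(1)] d by (intro exI[of _ "pw q n"]) auto
qed

lemma W_R: "\<not> (\<exists>t'. P0 t' \<and> t' \<le> m \<and> m \<le> lc m t') \<Longrightarrow> W = {x. 0 \<le> x}"
proof
  show "W \<subseteq> {x. 0 \<le> x}" using W_nonneg by blast
next
  assume R: "\<not> (\<exists>t'. P0 t' \<and> t' \<le> m \<and> m \<le> lc m t')"
  show "{x. 0 \<le> x} \<subseteq> W"
  proof
    fix x :: real assume "x \<in> {x. 0 \<le> x}"
    hence x: "0 \<le> x" by simp
    define N where "N = nat (ceiling x) + 1"
    have N: "x < real N" unfolding N_def by linarith
    define g where "g = pw t N"
    have g: "P0 g" unfolding g_def using P0_pw pt t0 by blast
    have vg: "val g = real N" unfolding g_def using val_pw val_t pt t0 by simp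
    define s where "s = real N - x"
    have s: "0 < s" using N s_def by simp
    define A1 where "A1 = {p. P0 p \<and> x < val p}"
    define A2 where "A2 = {p. P0 p \<and> s < val p}"
    have "Sup A1 \<cdot> Sup A2 \<le> lc m g"
      unfolding Sup_mul_Sup
    proof (rule Sup_least, clarify)
      fix p1 p2 assume p1: "p1 \<in> A1" and p2: "p2 \<in> A2"
      have q1: "P0 p1" "x < val p1" using p1 unfolding A1_def by auto
      have q2: "P0 p2" "s < val p2" using p2 unfolding A2_def by auto
      have "val g \<le> val (p1 \<cdot> p2)" using val_add[OF q1(1) q2(1)] q1 q2 vg unfolding s_def by simp
      hence "p1 \<cdot> p2 \<preceq> g" using val_iff[OF P0_mul[OF q1(1) q2(1)] g] by blast
      thus "p1 \<cdot> p2 \<le> lc m g" using lc_le_iff pr_mul q1(1) q2(1) by blast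
    qed
    then obtain b1 b2 where b: "Sup A1 \<le> b1" "Sup A2 \<le> b2" "lc m g = b1 \<cdot> b2" using shp by blast
    obtain \<beta>1 where \<beta>1: "pr \<beta>1" "\<beta>1 \<le> b1" "b1 \<le> lc m \<beta>1" using FL[OF mx _ _ b(3)] g by blast
    obtain \<beta>2 where \<beta>2: "pr \<beta>2" "\<beta>2 \<le> b2" "b2 \<le> lc m \<beta>2" using FL[OF mx _ _, of g b2 b1] b(3) g by (metis comm)
    have "\<beta>1 \<cdot> \<beta>2 \<le> lc m g" using mono2[OF \<beta>1(2) \<beta>2(2)] b(3) by simp
    hence b12: "\<beta>1 \<cdot> \<beta>2 \<preceq> g" using lc_le_iff pr_mul \<beta>1(1) \<beta>2(1) by blast
    have "g \<le> b1 \<cdot> b2" using le_loc[OF mx, of g] b(3) by simp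
    also have "\<dots> \<le> lc m \<beta>1 \<cdot> lc m \<beta>2" using \<beta>1(3) \<beta>2(3) by (rule mono2)
    also have "\<dots> \<le> lc m (\<beta>1 \<cdot> \<beta>2)" by (rule loc_mul_le[OF mx])
    finally have "g \<preceq> \<beta>1 \<cdot> \<beta>2" using lc_le_iff g by blast
    hence "\<beta>1 \<cdot> \<beta>2 \<noteq> bot" using lle_ne_bot[OF mx] g by blast
    hence b0: "\<beta>1 \<noteq> bot" "\<beta>2 \<noteq> bot" by auto
    have vsum: "val g \<le> val \<beta>1 + val \<beta>2" using val_iff[OF P0_mul g] b12 val_add \<beta>1(1) \<beta>2(1) b0 by metis
    have v1: "val \<beta>1 \<le> x"
    proof (rule ccontr)
      assume "\<not> val \<beta>1 \<le> x"
      then obtain p where p: "P0 p" "x < val p" "val p < x + (val \<beta>1 - x)" using dense[OF R x, of "val \<beta>1 - x"] by auto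
      hence "p \<in> A1" unfolding A1_def by simp
      hence "p \<le> lc m \<beta>1" using order_trans[OF order_trans[OF Sup_upper b(1)] \<beta>1(3)] by blast
      hence "p \<preceq> \<beta>1" using lc_le_iff p by blast
      hence "val \<beta>1 \<le> val p" using val_mono p by blast
      thus False using p by simp
    qed
    have v2: "val \<beta>2 \<le> s"
    proof (rule ccontr)
      assume "\<not> val \<beta>2 \<le> s"
      then obtain p where p: "P0 p" "s < val p" "val p < s + (val \<beta>2 - s)" using dense[OF R _, of s "val \<beta>2 - s"] s by auto
      hence "p \<in> A2" unfolding A2_def by simp
      hence "p \<le> lc m \<beta>2" using order_trans[OF order_trans[OF Sup_upper b(2)] \<beta>2(3)] by blast
      hence "p \<preceq> \<beta>2" using lc_le_iff p by blast
      hence "val \<beta>2 \<le> val p" using val_mono p by blast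
      thus False using p by simp
    qed
    have "val \<beta>1 = x" using v1 v2 vsum vg s_def by simp
    thus "x \<in> W" unfolding W_def using \<beta>1(1) b0 by blast
  qed
qed

end



lemma upset_cases:
  fixes U :: "real set"
  assumes U0: "U \<subseteq> {x. 0 \<le> x}" and up: "\<forall>u\<in>U. \<forall>w. u \<le> w \<longrightarrow> w \<in> U"
  shows "U = {} \<or> (\<exists>r\<ge>0. U = {r<..}) \<or> (\<exists>r\<ge>0. U = {r..})"
proof (cases "U = {}")
  case False
  define r where "r = Inf U"
  have bdd: "bdd_below U" using U0 unfolding bdd_below_def by auto
  have r0: "0 \<le> r" unfolding r_def using False U0 by (intro cInf_greatest) auto
  have rl: "\<And>u. u \<in> U \<Longrightarrow> r \<le> u" unfolding r_def using bdd by (simp add: cInf_lower)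
  show ?thesis
  proof (cases "r \<in> U")
    case True
    have "U = {r..}" using rl up True by auto
    thus ?thesis using r0 by blast
  next
    case nr: False
    have "U = {r<..}"
    proof (rule set_eqI, rule iffI)
      fix w assume w: "w \<in> U"
      have "r \<le> w" using rl[OF w] .
      moreover have "r \<noteq> w" using nr w by auto
      ultimately show "w \<in> {r<..}" by simp
    next
      fix w assume "w \<in> {r<..}"
      hence "Inf U < w" using r_def by simp
      then obtain u where "u \<in> U" "u < w" using cInf_less_iff[OF False bdd] by blast
      thus "w \<in> U" using up by auto
    qed
    thus ?thesis using r0 by blast
  qed
qed simp

lemma ereal_gt: "ereal ` {r<..} \<union> {\<infinity>} = {x. ereal r < x}"
proof (rule set_eqI)
  fix x :: ereal show "x \<in> ereal ` {r<..} \<union> {\<infinity>} \<longleftrightarrow> x \<in> {x. ereal r < x}"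
    by (cases x) auto
qed

lemma ereal_ge: "ereal ` {r..} \<union> {\<infinity>} = {x. ereal r \<le> x}"
proof (rule set_eqI)
  fix x :: ereal show "x \<in> ereal ` {r..} \<union> {\<infinity>} \<longleftrightarrow> x \<in> {x. ereal r \<le> x}"
    by (cases x) auto
qed

lemma ereal_sub: "ereal ` A \<union> {\<infinity>} \<subseteq> ereal ` B \<union> {\<infinity>} \<longleftrightarrow> A \<subseteq> B"
  by auto

lemma ereal_set_add: "set_add (ereal ` A \<union> {\<infinity>}) (ereal ` B \<union> {\<infinity>}) = ereal ` {a + b |a b. a \<in> A \<and> b \<in> B} \<union> {\<infinity>}"
proof (rule set_eqI, rule iffI)
  fix z assume "z \<in> set_add (ereal ` A \<union> {\<infinity>}) (ereal ` B \<union> {\<infinity>})"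
  then obtain x y where xy: "z = x + y" "x \<in> ereal ` A \<union> {\<infinity>}" "y \<in> ereal ` B \<union> {\<infinity>}" unfolding set_add_def by blast
  show "z \<in> ereal ` {a + b |a b. a \<in> A \<and> b \<in> B} \<union> {\<infinity>}"
  proof (cases "x = \<infinity> \<or> y = \<infinity>")
    case True
    hence "z = \<infinity>" using xy by auto
    thus ?thesis by simp
  next
    case False
    then obtain a b where ab: "a \<in> A" "b \<in> B" "x = ereal a" "y = ereal b" using xy by auto
    hence "z = ereal (a + b)" using xy by simp
    moreover have "a + b \<in> {a + b |a b. a \<in> A \<and> b \<in> B}" using ab by blast
    ultimately show ?thesis by blast
  qed
next
  fix z assume z: "z \<in> ereal ` {a + b |a b. a \<in> A \<and> b \<in> B} \<union> {\<infinity>}"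
  show "z \<in> set_add (ereal ` A \<union> {\<infinity>}) (ereal ` B \<union> {\<infinity>})"
  proof (cases "z = \<infinity>")
    case True
    hence "z = \<infinity> + \<infinity>" by simp
    thus ?thesis unfolding set_add_def by blast
  next
    case False
    then obtain a b where "a \<in> A" "b \<in> B" "z = ereal a + ereal b" using z by auto
    thus ?thesis unfolding set_add_def by blast
  qed
qed

lemma mlat_iso_intro:
  assumes "\<forall>x\<in>A. f x \<in> B" "\<forall>z\<in>B. \<exists>x\<in>A. f x = z"
    and "\<forall>x\<in>A. \<forall>y\<in>A. leB (f x) (f y) \<longleftrightarrow> leA x y"
    and "\<forall>x\<in>A. \<forall>y\<in>A. f (mA x y) = mB (f x) (f y)"
    and "\<And>x y. x \<in> A \<Longrightarrow> y \<in> A \<Longrightarrow> leA x y \<Longrightarrow> leA y x \<Longrightarrow> x = y"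
    and "\<And>z. leB z z"
  shows "mlat_isomorphic A leA mA B leB mB"
proof -
  have "inj_on f A"
  proof (rule inj_onI)
    fix x y assume "x \<in> A" "y \<in> A" "f x = f y"
    thus "x = y" using assms(3,5,6) by metis
  qed
  moreover have "f ` A = B"
  proof
    show "f ` A \<subseteq> B" using assms(1) by blast
    show "B \<subseteq> f ` A"
    proof
      fix z assume "z \<in> B"
      then obtain x where "x \<in> A" "f x = z" using assms(2) by blast
      thus "z \<in> f ` A" by blast
    qed
  qed
  ultimately show ?thesis unfolding mlat_isomorphic_def mlat_iso_def bij_betw_def using assms(3,4) by blast
qed

context VL begin

lemma Vset_up: "x \<in> C \<Longrightarrow> u \<in> Vset x \<Longrightarrow> w \<in> W \<Longrightarrow> u \<le> w \<Longrightarrow> w \<in> Vset x"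
proof -
  assume x: "x \<in> C" and u: "u \<in> Vset x" and w: "w \<in> W" and uw: "u \<le> w"
  obtain p where "P0 p" "val p = w" using w W_def by auto
  thus ?thesis using I2[OF x u] uw by blast
qed

lemma lmul_C: "x \<in> C \<Longrightarrow> y \<in> C \<Longrightarrow> loc_mul mul m x y \<in> C"
  unfolding loc_mul_def using lc_C by blast

lemma isoR: "W = {x. 0 \<le> x} \<Longrightarrow> mlat_isomorphic C (\<le>) (loc_mul mul m) R1 (\<subseteq>) set_add"
proof -
  assume WR: "W = {x. 0 \<le> x}"
  define f where "f x = ereal ` Vset x \<union> {\<infinity>}" for x
  show ?thesis
  proof (rule mlat_iso_intro[where f = f])
    show "\<forall>x\<in>C. f x \<in> R1"
    proof
      fix x assume x: "x \<in> C"
      have U0: "Vset x \<subseteq> {x. 0 \<le> x}" using Vset_W WR by blast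
      have up: "\<forall>u\<in>Vset x. \<forall>w. u \<le> w \<longrightarrow> w \<in> Vset x"
        using Vset_up[OF x] U0 WR by (metis (mono_tags, lifting) mem_Collect_eq order_trans subsetD)
      from upset_cases[OF U0 up] show "f x \<in> R1"
      proof (elim disjE exE conjE)
        assume "Vset x = {}" thus ?thesis unfolding f_def R1_def by simp
      next
        fix r :: real assume r: "0 \<le> r" "Vset x = {r<..}"
        hence "f x = {z. ereal r < z}" unfolding f_def using ereal_gt by simp
        thus ?thesis unfolding R1_def using r(1) by blast
      next
        fix r :: real assume r: "0 \<le> r" "Vset x = {r..}"
        hence "f x = {z. ereal r \<le> z}" unfolding f_def using ereal_ge by simp
        thus ?thesis unfolding R1_def using r(1) by blast
      qed
    qed
    show "\<forall>z\<in>R1. \<exists>x\<in>C. f x = z"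
    proof
      fix z assume "z \<in> R1"
      then consider (a) r where "0 \<le> r" "z = {x. ereal r < x}" | (b) r where "0 \<le> r" "z = {x. ereal r \<le> x}"
        | (c) "z = {\<infinity>}" unfolding R1_def by blast
      thus "\<exists>x\<in>C. f x = z"
      proof cases
        case a
        have "{r<..} \<subseteq> W" using a WR by auto
        moreover have "\<forall>u\<in>{r<..}. \<forall>w\<in>W. u \<le> w \<longrightarrow> w \<in> {r<..}" by auto
        ultimately obtain x where x: "x \<in> C" "Vset x = {r<..}" using I4 by blast
        hence "f x = z" unfolding f_def using a(2) ereal_gt by simp
        thus ?thesis using x(1) by blast
      next
        case b
        have "{r..} \<subseteq> W" using b WR by auto
        moreover have "\<forall>u\<in>{r..}. \<forall>w\<in>W. u \<le> w \<longrightarrow> w \<in> {r..}" by auto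
        ultimately obtain x where x: "x \<in> C" "Vset x = {r..}" using I4 by blast
        hence "f x = z" unfolding f_def using b(2) ereal_ge by simp
        thus ?thesis using x(1) by blast
      next
        case c
        have "bot \<in> C" using lc_C loc_bot[OF mx] by metis
        thus ?thesis using c Vset_bot unfolding f_def by auto
      qed
    qed
    show "\<forall>x\<in>C. \<forall>y\<in>C. f x \<subseteq> f y \<longleftrightarrow> x \<le> y"
      unfolding f_def ereal_sub using I1 by (intro ballI) (rule sym, blast)
    show "\<forall>x\<in>C. \<forall>y\<in>C. f (loc_mul mul m x y) = set_add (f x) (f y)"
      unfolding f_def loc_mul_def by (intro ballI) (simp only: I3 ereal_set_add)
  qed auto
qed

definition Nset where "Nset x = {n::nat. real n \<in> Vset x}"

lemma isoZ: "W = range real \<Longrightarrow> mlat_isomorphic C (\<le>) (loc_mul mul m) Zminus (\<le>) (+)"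
proof -
  assume WZ: "W = range real"
  have VN: "Vset x = real ` Nset x" for x
    using Vset_W[of x] WZ unfolding Nset_def by auto
  have Nup: "x \<in> C \<Longrightarrow> n \<in> Nset x \<Longrightarrow> n \<le> k \<Longrightarrow> k \<in> Nset x" for x n k
    using Vset_up[of x "real n" "real k"] WZ unfolding Nset_def by auto
  have Nform: "x \<in> C \<Longrightarrow> Nset x \<noteq> {} \<Longrightarrow> Nset x = {Least (\<lambda>n. n \<in> Nset x)..}" for x
  proof -
    assume x: "x \<in> C" and ne: "Nset x \<noteq> {}"
    show ?thesis
    proof (rule set_eqI, rule iffI)
      fix k assume "k \<in> Nset x" thus "k \<in> {Least (\<lambda>n. n \<in> Nset x)..}" by (simp add: Least_le)
    next
      fix k assume k: "k \<in> {Least (\<lambda>n. n \<in> Nset x)..}"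
      obtain n where "n \<in> Nset x" using ne by blast
      hence L: "Least (\<lambda>n. n \<in> Nset x) \<in> Nset x" by (rule LeastI)
      have "Least (\<lambda>n. n \<in> Nset x) \<le> k" using k by simp
      thus "k \<in> Nset x" using Nup[OF x L] by blast
    qed
  qed
  define L where "L x = Least (\<lambda>n. n \<in> Nset x)" for x
  define f where "f x = (if Nset x = {} then (-\<infinity>::ereal) else ereal (- real (L x)))" for x
  have NI: "x \<in> C \<Longrightarrow> y \<in> C \<Longrightarrow> x \<le> y \<longleftrightarrow> Nset x \<subseteq> Nset y" for x y
    using I1[of x y] VN by (auto simp: inj_image_subset_iff)
  have Nmul: "x \<in> C \<Longrightarrow> y \<in> C \<Longrightarrow> Nset (lc m (x \<cdot> y)) = {a + b |a b. a \<in> Nset x \<and> b \<in> Nset y}" for x y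
  proof -
    assume x: "x \<in> C" and y: "y \<in> C"
    have "real ` Nset (lc m (x \<cdot> y)) = {a + b |a b. a \<in> real ` Nset x \<and> b \<in> real ` Nset y}"
      using I3[OF x y] VN by simp
    also have "\<dots> = real ` {a + b |a b. a \<in> Nset x \<and> b \<in> Nset y}" by force
    finally show ?thesis by (simp add: inj_image_eq_iff)
  qed
  show ?thesis
  proof (rule mlat_iso_intro[where f = f])
    show "\<forall>x\<in>C. f x \<in> Zminus"
    proof
      fix x assume "x \<in> C"
      show "f x \<in> Zminus"
      proof (cases "Nset x = {}")
        case True thus ?thesis unfolding f_def Zminus_def by simp
      next
        case False
        have "f x = ereal (of_int (- int (L x)))" unfolding f_def using False by simp
        hence "\<exists>n::int. f x = ereal (of_int n) \<and> n \<le> 0" by (intro exI[of _ "- int (L x)"]) simp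
        thus ?thesis unfolding Zminus_def by blast
      qed
    qed
    show "\<forall>z\<in>Zminus. \<exists>x\<in>C. f x = z"
    proof
      fix z assume "z \<in> Zminus"
      then consider (a) n :: int where "n \<le> 0" "z = ereal (of_int n)" | (b) "z = -\<infinity>" unfolding Zminus_def by blast
      thus "\<exists>x\<in>C. f x = z"
      proof cases
        case a
        define k where "k = nat (- n)"
        have "real ` {k..} \<subseteq> W" using WZ by auto
        moreover have "\<forall>u\<in>real ` {k..}. \<forall>w\<in>W. u \<le> w \<longrightarrow> w \<in> real ` {k..}" using WZ by auto
        ultimately obtain x where x: "x \<in> C" "Vset x = real ` {k..}" using I4 by blast
        have "Nset x = {k..}" using x(2) unfolding Nset_def by auto
        hence "L x = k" unfolding L_def by (metis Least_equality atLeast_iff order_refl)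
        hence "f x = z" using \<open>Nset x = {k..}\<close> a k_def unfolding f_def by auto
        thus ?thesis using x by blast
      next
        case b
        have "bot \<in> C" using lc_C loc_bot[OF mx] by metis
        moreover have "Nset bot = {}" using Vset_bot unfolding Nset_def by simp
        ultimately show ?thesis using b unfolding f_def by auto
      qed
    qed
    show "\<forall>x\<in>C. \<forall>y\<in>C. f x \<le> f y \<longleftrightarrow> x \<le> y"
    proof (intro ballI)
      fix x y assume x: "x \<in> C" and y: "y \<in> C"
      show "f x \<le> f y \<longleftrightarrow> x \<le> y"
      proof (cases "Nset x = {}")
        case True thus ?thesis using NI[OF x y] unfolding f_def by simp
      next
        case nx: False
        show ?thesis
        proof (cases "Nset y = {}")
          case True thus ?thesis using NI[OF x y] nx unfolding f_def by auto
        next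
          case ny: False
          have fx: "Nset x = {L x..}" using Nform[OF x nx] unfolding L_def by simp
          have fy: "Nset y = {L y..}" using Nform[OF y ny] unfolding L_def by simp
          have "Nset x \<subseteq> Nset y \<longleftrightarrow> L y \<le> L x" unfolding fx fy by simp
          thus ?thesis using NI[OF x y] nx ny unfolding f_def by auto
        qed
      qed
    qed
    show "\<forall>x\<in>C. \<forall>y\<in>C. f (loc_mul mul m x y) = f x + f y"
    proof (intro ballI)
      fix x y assume x: "x \<in> C" and y: "y \<in> C"
      have NM: "Nset (loc_mul mul m x y) = {a + b |a b. a \<in> Nset x \<and> b \<in> Nset y}"
        unfolding loc_mul_def using Nmul[OF x y] by simp
      show "f (loc_mul mul m x y) = f x + f y"
      proof (cases "Nset x = {} \<or> Nset y = {}")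
        case True
        hence "Nset (loc_mul mul m x y) = {}" using NM by auto
        thus ?thesis using True unfolding f_def by auto
      next
        case False
        hence nx: "Nset x \<noteq> {}" and ny: "Nset y \<noteq> {}" by auto
        have fx: "Nset x = {L x..}" using Nform[OF x nx] unfolding L_def by simp
        have fy: "Nset y = {L y..}" using Nform[OF y ny] unfolding L_def by simp
        have "Nset (loc_mul mul m x y) = {L x + L y..}"
        proof (rule set_eqI, rule iffI)
          fix k assume "k \<in> Nset (loc_mul mul m x y)"
          then obtain a b where "k = a + b" "a \<in> Nset x" "b \<in> Nset y" using NM by blast
          thus "k \<in> {L x + L y..}" unfolding fx fy by simp
        next
          fix k assume k: "k \<in> {L x + L y..}"
          have "L x \<in> Nset x" "k - L x \<in> Nset y" using k unfolding fx fy by auto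
          moreover have "k = L x + (k - L x)" using k by simp
          ultimately show "k \<in> Nset (loc_mul mul m x y)" using NM by blast
        qed
        hence "L (loc_mul mul m x y) = L x + L y" unfolding L_def by (metis Least_equality atLeast_iff order_refl)
        moreover have "Nset (loc_mul mul m x y) \<noteq> {}" using \<open>Nset (loc_mul mul m x y) = {L x + L y..}\<close> by auto
        ultimately show ?thesis using nx ny unfolding f_def by simp
      qed
    qed
  qed auto
qed

end

context SL begin

lemma VL_i: "maximal_el m \<Longrightarrow> pr t \<Longrightarrow> t \<noteq> bot \<Longrightarrow> t \<le> m \<Longrightarrow> VL mul m t"
  by (intro VL.intro SL_axioms VL_axioms.intro)

lemma loc_iso: "maximal_el m \<Longrightarrow>
    mlat_isomorphic (loc_carrier mul m) (\<le>) (loc_mul mul m) Zminus (\<le>) (+)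
  \<or> mlat_isomorphic (loc_carrier mul m) (\<le>) (loc_mul mul m) R1 (\<subseteq>) set_add"
proof -
  assume m: "maximal_el m"
  show ?thesis
  proof (cases "\<exists>t'. pr t' \<and> t' \<noteq> bot \<and> t' \<le> m \<and> m \<le> loc mul m t'")
    case True
    then obtain t where t: "pr t" "t \<noteq> bot" "t \<le> m" "m \<le> loc mul m t" by blast
    interpret V: VL mul m t using VL_i[OF m t(1-3)] .
    show ?thesis using V.isoZ V.W_Z t(4) by blast
  next
    case False
    have "\<exists>t. pr t \<and> t \<noteq> bot \<and> t \<le> m"
    proof (rule ccontr)
      assume "\<not> (\<exists>t. pr t \<and> t \<noteq> bot \<and> t \<le> m)"
      hence "Sup {c. pr c \<and> c \<le> m} \<le> bot" by (intro Sup_least) auto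
      hence "m \<le> bot" using Sup_pr_below[of m] by simp
      thus False using max_ne_bot[OF m] by (simp add: bot_unique)
    qed
    then obtain t where t: "pr t" "t \<noteq> bot" "t \<le> m" by blast
    interpret V: VL mul m t using VL_i[OF m t] .
    show ?thesis using V.isoR V.W_R False by blast
  qed
qed

end


theorem theorem3p9:
  fixes mul :: "'a::complete_lattice \<Rightarrow> 'a \<Rightarrow> 'a"
  assumes "C_lattice mul"
    and "lattice_domain mul"
    and "\<exists>x::'a. x \<noteq> bot \<and> x \<noteq> top"
    and "sharp mul"
    and "\<forall>x::'a. \<exists>S. (\<forall>s\<in>S. principal_el mul s) \<and> x = Sup S"
  shows "(\<forall>m::'a. maximal_el m \<longrightarrow>
            mlat_isomorphic (loc_carrier mul m) (\<le>) (loc_mul mul m) Zminus (\<le>) (+)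
          \<or> mlat_isomorphic (loc_carrier mul m) (\<le>) (loc_mul mul m) R1 (\<subseteq>) set_add)
         \<and> Pruefer_1dim mul"
proof -
  interpret S: SL mul by (rule SL.intro) (use assms in auto)
  show ?thesis using S.loc_iso S.Pruefer by blast
qed

end
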